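(* Fix $\delta>0$. The function $V^\delta$ restricted to $\mathcal G_\delta\times[\underline{\lambda},\infty)$ is the smallest supersolution of the discrete HJB equation $\mathcal T(W)-W=0$ satisfying the growth condition $W(x,\lambda)\le K+x$ (for some constant $K>0$); that is, $V^\delta$ satisfies $\mathcal T(V^\delta)\le V^\delta$ and this growth condition, and every nonnegative measurable $\overline W:\mathcal G_\delta\times[\underline{\lambda},\infty)\to[0,\infty)$ with $\mathcal T(\overline W)\le\overline W$ satisfying the growth condition fulfils $\overline W\ge V^\delta$ on $\mathcal G_\delta\times[\underline{\lambda},\infty)$.
   Context: Model: fix $p>0$, $q>0$, $d>0$, $\beta>0$, $\underline{\lambda}\ge0$ and distribution functions $F_U,F_Y$ of strictly positive random variables with finite expectation. For initial intensity $\lambda\ge\underline{\lambda}$, $\lambda_t=\underline{\lambda}+e^{-dt}(\lambda-\underline{\lambda})+\sum_{k=1}^{\widetilde N_t}Y_ke^{-d(t-T_k)}$ with $\widetilde N$ a rate-$\beta$ Poisson process (arrival times $T_k$) and $Y_k$ i.i.d. $\sim F_Y$ independent of $\widetilde N$; conditionally on $(\lambda_s)$, claims arrive as an inhomogeneous Poisson process $N_t$ with intensity $\lambda_t$, with i.i.d. sizes $U_j\sim F_U$ independent of everything else; surplus $X_t=x+pt-\sum_{j\le N_t}U_j$. The premium satisfies $p=(1+\eta)\mathbb E(U_1)\lambda_{\mathrm{av}}$, $\eta>0$, $\lambda_{\mathrm{av}}=\lim_t\mathbb E(\int_0^t\lambda_sds)/t$. Extended strategies: a pair $(L,\tau^F)$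 with $L$ a dividend process (non-decreasing, càdlàg, adapted, $L_t\le X_t$ before ruin) and $\tau^F$ a stopping time at which all current surplus is paid and the business is closed; value $J((L,\tau^F);x,\lambda)=\mathbb E\big(\int_{0^-}^{\tau^L\wedge\tau^F}e^{-qt}dL_t+1_{\{\tau^F<\tau^L\}}e^{-q\tau^F}(X_{\tau^F}-L_{\tau^F})\big)$, $\tau^L=\inf\{t:X_t-L_{t^-}<0\}$. Discretization: for $\delta>0$, $\mathcal G_\delta=\{x_n^\delta=np\delta:n\ge0\}$, $\rho^\delta(x)=\max\{x_n^\delta\le x\}$. At state $(x_n^\delta,\lambda)$ let $\tau,U$ be the time until and size of the next claim, $T,Y$ the time until and size of the next intensity jump, $\lambda^c_t=\underline{\lambda}+e^{-dt}(\lambda-\underline{\lambda})$. Control actions: $\mathbf E_0$: pay nothing until $\delta\wedge\tau\wedge T$; if $\delta<\tau\wedge T$ new state $(x_{n+1}^\delta,\lambda^c_\delta)$; if $\tau\le\delta\wedge T$ and $y=x_n^\delta+p\tau-U<0$, ruin; if $y\ge0$ pay $y-\rho^\delta(y)$ and new state $(\rho^\delta(y),\lambda^c_\tau)$; if $T<\delta\wedge\tau$ pay $pT$ and new state $(x_n^\delta,\lambda^c_T+Y)$. $\mathbf E_1$ (only if $n\ge1$): pay $p\delta$, new state $(x_{n-1}^\delta,\lambda)$. $\mathbf E_F$: pay $x_n^\delta$ and close. $\widetilde\Pi^\delta_{x_n^\delta,\lambda}$: extended strategies obtained by finite or infinite sequences of these actions; $V^\delta(x_n^\delta,\lambda)=\sup_{\pi\in\widetilde\Pi^\delta_{x_n^\delta,\lambda}}J(\pi;x_n^\delta,\lambda)$.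 Operators on nonnegative Lebesgue measurable $w:\mathcal G_\delta\times[\underline{\lambda},\infty)\to[0,\infty)$: with $y=x_n^\delta+p\tau-U$, $\mathcal T_0(w)(x_n^\delta,\lambda)=\mathbb P(\delta\wedge T\wedge\tau=\delta)e^{-q\delta}w(x_{n+1}^\delta,\lambda^c_\delta)+\mathbb E\big(1_{\{\delta\wedge T\wedge\tau=\tau,\ y\ge0\}}e^{-q\tau}[w(\rho^\delta(y),\lambda^c_\tau)+y-\rho^\delta(y)]\big)+\mathbb E\big(1_{\{\delta\wedge T\wedge\tau=T\}}e^{-qT}[w(x_n^\delta,\lambda^c_T+Y)+pT]\big)$; $\mathcal T_1(w)(x_n^\delta,\lambda)=w(x_{n-1}^\delta,\lambda)+\delta p$ (for $n\ge1$); $\mathcal T_F(w)(x_n^\delta,\lambda)=x_n^\delta$; $\mathcal T=\max\{\mathcal T_0,\mathcal T_1,\mathcal T_F\}$ (with $\mathcal T_1$ omitted when $n=0$). *)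

theory Defs
  imports "HOL-Probability.Probability"
begin

text \<open>Parameters are passed explicitly: premium rate p, discount rate q, decay d,
  jump rate beta of the intensity, lower bound lam0 of the intensity,
  claim-size law FU, intensity-jump law FY, step size delta.\<close>

definition grid :: "real \<Rightarrow> real \<Rightarrow> real set" where
  "grid p delta = {x. \<exists>n::nat. x = real n * p * delta}"

definition rho :: "real \<Rightarrow> real \<Rightarrow> real \<Rightarrow> real" where
  "rho p delta y = real (nat \<lfloor>y / (p * delta)\<rfloor>) * p * delta"

text \<open>Deterministic intensity decay between jumps and its integral.\<close>
definition lamc :: "real \<Rightarrow> real \<Rightarrow> real \<Rightarrow> real \<Rightarrow> real" where
  "lamc lam0 d l t = lam0 + exp (- d * t) * (l - lam0)"

definition Lam :: "real \<Rightarrow> real \<Rightarrow> real \<Rightarrow> real \<Rightarrow> real" where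
  "Lam lam0 d l t = integral {0..t} (\<lambda>s. lamc lam0 d l s)"

text \<open>Law of the time until the next claim when the intensity follows \<open>lamc\<close>
  (first point of an inhomogeneous Poisson process, constructed by time change
  of a standard exponential variable); value \<open>\<infinity>\<close> if there is no claim.\<close>
definition tau_law :: "real \<Rightarrow> real \<Rightarrow> real \<Rightarrow> ereal measure" where
  "tau_law lam0 d l = distr (density lborel (exponential_density 1)) borel
     (\<lambda>E. Inf (ereal ` {t. 0 \<le> t \<and> E \<le> Lam lam0 d l t}))"

text \<open>Law of the time until the next intensity jump.\<close>
definition T_law :: "real \<Rightarrow> real measure" where
  "T_law beta = density lborel (exponential_density beta)"

definition Omega :: "real \<Rightarrow> real \<Rightarrow> real \<Rightarrow> real measure \<Rightarrow> real measure \<Rightarrow> real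
    \<Rightarrow> ((ereal \<times> real) \<times> (real \<times> real)) measure" where
  "Omega lam0 d beta FU FY l = (tau_law lam0 d l \<Otimes>\<^sub>M FU) \<Otimes>\<^sub>M (T_law beta \<Otimes>\<^sub>M FY)"

text \<open>Long-run average intensity \<open>lim E(\<integral>_0^t lambda_s ds)/t\<close> in closed form.\<close>
definition lambda_av :: "real \<Rightarrow> real \<Rightarrow> real \<Rightarrow> real measure \<Rightarrow> real" where
  "lambda_av lam0 d beta FY = lam0 + beta * (\<integral>y. y \<partial>FY) / d"

definition T0 :: "real \<Rightarrow> real \<Rightarrow> real \<Rightarrow> real \<Rightarrow> real \<Rightarrow> real measure \<Rightarrow> real measure \<Rightarrow> real
    \<Rightarrow> (real \<Rightarrow> real \<Rightarrow> ennreal) \<Rightarrow> real \<Rightarrow> real \<Rightarrow> ennreal" where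
  "T0 p q d beta lam0 FU FY delta w x l =
     emeasure (Omega lam0 d beta FU FY l)
        {((\<tau>, U), (T, Y)) \<in> space (Omega lam0 d beta FU FY l).
           min (ereal delta) (min (ereal T) \<tau>) = ereal delta}
       * ennreal (exp (- q * delta)) * w (x + p * delta) (lamc lam0 d l delta)
   + (\<integral>\<^sup>+ ((\<tau>, U), (T, Y)).
        (let s = real_of_ereal \<tau>; y = x + p * s - U in
          of_bool (min (ereal delta) (min (ereal T) \<tau>) = \<tau> \<and> 0 \<le> y)
          * ennreal (exp (- q * s))
          * (w (rho p delta y) (lamc lam0 d l s) + ennreal (y - rho p delta y)))
      \<partial>Omega lam0 d beta FU FY l)
   + (\<integral>\<^sup>+ ((\<tau>, U), (T, Y)).
          of_bool (min (ereal delta) (min (ereal T) \<tau>) = ereal T)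
          * ennreal (exp (- q * T))
          * (w x (lamc lam0 d l T + Y) + ennreal (p * T))
      \<partial>Omega lam0 d beta FU FY l)"

definition T1 :: "real \<Rightarrow> real \<Rightarrow> (real \<Rightarrow> real \<Rightarrow> ennreal) \<Rightarrow> real \<Rightarrow> real \<Rightarrow> ennreal" where
  "T1 p delta w x l = w (x - p * delta) l + ennreal (delta * p)"

definition TF :: "real \<Rightarrow> real \<Rightarrow> ennreal" where
  "TF x l = ennreal x"

definition Top :: "real \<Rightarrow> real \<Rightarrow> real \<Rightarrow> real \<Rightarrow> real \<Rightarrow> real measure \<Rightarrow> real measure \<Rightarrow> real
    \<Rightarrow> (real \<Rightarrow> real \<Rightarrow> ennreal) \<Rightarrow> real \<Rightarrow> real \<Rightarrow> ennreal" where
  "Top p q d beta lam0 FU FY delta w x l =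
     (if p * delta \<le> x
      then max (max (T0 p q d beta lam0 FU FY delta w x l) (T1 p delta w x l)) (TF x l)
      else max (T0 p q d beta lam0 FU FY delta w x l) (TF x l))"

text \<open>A strategy chooses the next action as a
  function of the whole observed history, a list of states (surplus, intensity,
  current time) with the current state at the head.\<close>
datatype act = E0 | E1 | EF

type_synonym policy = "(real \<times> real \<times> real) list \<Rightarrow> act"

definition admissible :: "real \<Rightarrow> real \<Rightarrow> policy \<Rightarrow> bool" where
  "admissible p delta \<pi> \<longleftrightarrow> (\<forall>x l t h. \<pi> ((x, l, t) # h) = E1 \<longrightarrow> p * delta \<le> x)"

text \<open>Expected discounted payments of the first n actions of strategy \<pi>
  after history h.\<close>
primrec Jn :: "real \<Rightarrow> real \<Rightarrow> real \<Rightarrow> real \<Rightarrow> real \<Rightarrow> real measure \<Rightarrow> real measure \<Rightarrow> real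
    \<Rightarrow> policy \<Rightarrow> nat \<Rightarrow> (real \<times> real \<times> real) list \<Rightarrow> ennreal" where
  "Jn p q d beta lam0 FU FY delta \<pi> 0 h = 0"
| "Jn p q d beta lam0 FU FY delta \<pi> (Suc n) h =
    (case hd h of (x, l, t) \<Rightarrow>
      (case \<pi> h of
        EF \<Rightarrow> ennreal (exp (- q * t) * x)
      | E1 \<Rightarrow> ennreal (exp (- q * t) * (p * delta))
               + Jn p q d beta lam0 FU FY delta \<pi> n ((x - p * delta, l, t) # h)
      | E0 \<Rightarrow> (\<integral>\<^sup>+ ((\<tau>, U), (T, Y)).
           (if ereal delta < \<tau> \<and> delta < T then
              Jn p q d beta lam0 FU FY delta \<pi> n
                 ((x + p * delta, lamc lam0 d l delta, t + delta) # h)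
            else if \<tau> \<le> ereal delta \<and> \<tau> \<le> ereal T then
              (let s = real_of_ereal \<tau>; y = x + p * s - U in
                if y < 0 then 0
                else ennreal (exp (- q * (t + s)) * (y - rho p delta y))
                     + Jn p q d beta lam0 FU FY delta \<pi> n
                         ((rho p delta y, lamc lam0 d l s, t + s) # h))
            else if ereal T < \<tau> \<and> T < delta then
              ennreal (exp (- q * (t + T)) * (p * T))
              + Jn p q d beta lam0 FU FY delta \<pi> n
                  ((x, lamc lam0 d l T + Y, t + T) # h)
            else 0)
         \<partial>Omega lam0 d beta FU FY l)))"

definition J :: "real \<Rightarrow> real \<Rightarrow> real \<Rightarrow> real \<Rightarrow> real \<Rightarrow> real measure \<Rightarrow> real measure \<Rightarrow> real
    \<Rightarrow> policy \<Rightarrow> real \<Rightarrow> real \<Rightarrow> ennreal" where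
  "J p q d beta lam0 FU FY delta \<pi> x l =
     (SUP n. Jn p q d beta lam0 FU FY delta \<pi> n [(x, l, 0)])"

definition Vdelta :: "real \<Rightarrow> real \<Rightarrow> real \<Rightarrow> real \<Rightarrow> real \<Rightarrow> real measure \<Rightarrow> real measure \<Rightarrow> real
    \<Rightarrow> real \<Rightarrow> real \<Rightarrow> ennreal" where
  "Vdelta p q d beta lam0 FU FY delta x l =
     (SUP \<pi> \<in> {\<pi>. admissible p delta \<pi>}. J p q d beta lam0 FU FY delta \<pi> x l)"

end

theory Submission
  imports Defs
begin


locale setting =
  fixes p q d beta lam0 delta :: real and FU FY :: "real measure"
  assumes p: "p > 0" and q: "q > 0" and d: "d > 0" and beta: "beta > 0"
    and lam0: "lam0 \<ge> 0" and delta: "delta > 0"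
    and FU: "prob_space FU" and sFU: "sets FU = sets borel" and FUpos: "AE u in FU. u > 0"
    and FY: "prob_space FY" and sFY: "sets FY = sets borel" and FYpos: "AE y in FY. y > 0"
begin

abbreviation "Om l \<equiv> Omega lam0 d beta FU FY l"
abbreviation "EX1 \<equiv> density lborel (exponential_density (1::real))"
abbreviation "tmap l E \<equiv> Inf (ereal ` {t. 0 \<le> t \<and> E \<le> Lam lam0 d l t})"

lemma Lam_closed: assumes "t \<ge> 0"
  shows "Lam lam0 d l t = lam0 * t + (l - lam0) * (1 - exp (- d * t)) / d"
proof -
  have "((\<lambda>s. lamc lam0 d l s) has_integral
        ((lam0 * t + (l - lam0) * (1 - exp (- d * t)) / d) - (lam0 * 0 + (l - lam0) * (1 - exp (- d * 0)) / d))) {0..t}"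
  proof (rule fundamental_theorem_of_calculus[OF assms])
    fix x assume "x \<in> {0..t}"
    show "((\<lambda>s. lam0 * s + (l - lam0) * (1 - exp (- d * s)) / d) has_vector_derivative lamc lam0 d l x) (at x within {0..t})"
      unfolding has_real_derivative_iff_has_vector_derivative[symmetric] lamc_def
      using d by (auto intro!: derivative_eq_intros simp: field_simps)
  qed
  then show ?thesis unfolding Lam_def by (simp add: integral_unique)
qed

lemma lamc_ge: "l \<ge> lam0 \<Longrightarrow> lamc lam0 d l t \<ge> lam0"
  unfolding lamc_def by simp

lemma Lam_mono: assumes "l \<ge> lam0" "0 \<le> s" "s \<le> t" shows "Lam lam0 d l s \<le> Lam lam0 d l t"
proof -
  have "exp (- d * t) \<le> exp (- d * s)" using assms d by (simp add: mult_left_mono)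
  then have "(l - lam0) * (1 - exp (- d * s)) \<le> (l - lam0) * (1 - exp (- d * t))"
    using assms by (intro mult_left_mono) auto
  moreover have "lam0 * s \<le> lam0 * t" using assms lam0 by (simp add: mult_left_mono)
  ultimately show ?thesis using assms d by (simp add: Lam_closed divide_right_mono add_mono)
qed

lemma isCont_Lam: "t > 0 \<Longrightarrow> isCont (\<lambda>t. Lam lam0 d l t) t"
proof -
  assume t: "t > 0"
  have "isCont (\<lambda>t. lam0 * t + (l - lam0) * (1 - exp (- d * t)) / d) t" using d by (intro continuous_intros) auto
  moreover have "eventually (\<lambda>s. Lam lam0 d l s = lam0 * s + (l - lam0) * (1 - exp (- d * s)) / d) (nhds t)"
    using t by (intro eventually_mono[OF eventually_nhds_in_open[of "{0<..}"]]) (auto simp: Lam_closed)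
  ultimately show ?thesis using isCont_cong[of "\<lambda>s. Lam lam0 d l s" _ t] by simp
qed

lemma isCont_Lam_eps: assumes "t > 0" "e > 0"
  obtains h where "h > 0" "\<And>s. \<bar>s - t\<bar> < h \<Longrightarrow> \<bar>Lam lam0 d l s - Lam lam0 d l t\<bar> < e"
proof -
  from isCont_Lam[OF assms(1), of l] have "(\<lambda>t. Lam lam0 d l t) \<midarrow>t\<rightarrow> Lam lam0 d l t" by (simp add: isCont_def)
  then obtain h where h: "h > 0" "\<And>s. s \<noteq> t \<and> norm (s - t) < h \<Longrightarrow> norm (Lam lam0 d l s - Lam lam0 d l t) < e"
    using assms(2) unfolding LIM_eq by blast
  show ?thesis
  proof (rule that[OF h(1)])
    fix s assume "\<bar>s - t\<bar> < h" then show "\<bar>Lam lam0 d l s - Lam lam0 d l t\<bar> < e"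
      using h(2)[of s] assms(2) by (cases "s = t") auto
  qed
qed

lemma tmap_nonneg: "0 \<le> tmap l E"
  by (rule Inf_greatest) auto

lemma tmap_eq: assumes l: "l \<ge> lam0" and t: "t > 0" and eq: "tmap l E = ereal t"
  shows "E = Lam lam0 d l t"
proof (rule ccontr)
  assume "E \<noteq> Lam lam0 d l t"
  then consider "Lam lam0 d l t < E" | "E < Lam lam0 d l t" by linarith
  then show False
  proof cases
    case 1
    obtain h where h: "h > 0" "\<And>s. \<bar>s - t\<bar> < h \<Longrightarrow> \<bar>Lam lam0 d l s - Lam lam0 d l t\<bar> < E - Lam lam0 d l t"
      using isCont_Lam_eps[OF t, of "E - Lam lam0 d l t" l] 1 by auto
    have a: "Lam lam0 d l (t + h/2) < E" using h(2)[of "t + h/2"] h(1) by auto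
    have "ereal (t + h/2) \<le> tmap l E"
    proof (rule Inf_greatest, clarify)
      fix s assume s: "0 \<le> s" "E \<le> Lam lam0 d l s"
      show "ereal (t + h/2) \<le> ereal s"
      proof (rule ccontr)
        assume "\<not> ereal (t + h/2) \<le> ereal s"
        then have "s \<le> t + h/2" by simp
        then have "Lam lam0 d l s \<le> Lam lam0 d l (t + h/2)" using Lam_mono[OF l s(1)] by blast
        then show False using a s by simp
      qed
    qed
    then show False using eq h(1) by simp
  next
    case 2
    obtain h where h: "h > 0" "\<And>s. \<bar>s - t\<bar> < h \<Longrightarrow> \<bar>Lam lam0 d l s - Lam lam0 d l t\<bar> < Lam lam0 d l t - E"
      using isCont_Lam_eps[OF t, of "Lam lam0 d l t - E" l] 2 by auto
    define s where "s = max (t/2) (t - h/2)"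
    have s: "0 \<le> s" "s < t" "\<bar>s - t\<bar> < h" using t h(1) by (auto simp: s_def)
    have "E \<le> Lam lam0 d l s" using h(2)[OF s(3)] by auto
    then have "tmap l E \<le> ereal s" using s by (intro Inf_lower) auto
    then show False using eq s by simp
  qed
qed

lemma tmap_rat: assumes l: "l \<ge> lam0"
  shows "tmap l E = (INF r\<in>{r\<in>\<rat>. 0 \<le> r}. if E \<le> Lam lam0 d l r then ereal r else \<infinity>)"
proof (rule antisym)
  show "tmap l E \<le> (INF r\<in>{r\<in>\<rat>. 0 \<le> r}. if E \<le> Lam lam0 d l r then ereal r else \<infinity>)"
    by (rule INF_greatest) (auto intro!: Inf_lower)
  show "(INF r\<in>{r\<in>\<rat>. 0 \<le> r}. if E \<le> Lam lam0 d l r then ereal r else \<infinity>) \<le> tmap l E"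
  proof (rule Inf_greatest, clarify)
    fix t assume t: "0 \<le> t" "E \<le> Lam lam0 d l t"
    show "(INF r\<in>{r\<in>\<rat>. 0 \<le> r}. if E \<le> Lam lam0 d l r then ereal r else \<infinity>) \<le> ereal t"
    proof (rule ereal_le_epsilon2)
      fix e :: real assume e: "e > 0"
      obtain r where r: "r \<in> \<rat>" "t < r" "r < t + e" using Rats_dense_in_real[of t "t+e"] e by auto
      have "E \<le> Lam lam0 d l r" using Lam_mono[OF l t(1), of r] r t by auto
      then have "(INF r\<in>{r\<in>\<rat>. 0 \<le> r}. if E \<le> Lam lam0 d l r then ereal r else \<infinity>) \<le> ereal r"
        using r t by (intro INF_lower2[of r]) auto
      also have "\<dots> \<le> ereal (t + e)" using r by simp
      finally show "(INF r\<in>{r\<in>\<rat>. 0 \<le> r}. if E \<le> Lam lam0 d l r then ereal r else \<infinity>) \<le> ereal t + ereal e" by simp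
    qed
  qed
qed

lemma tmap_meas: "(\<lambda>(l, E). tmap (max lam0 l) E) \<in> borel_measurable (borel \<Otimes>\<^sub>M borel)"
proof -
  have eq: "(\<lambda>(l, E). tmap (max lam0 l) E) = (\<lambda>x. INF r\<in>{r\<in>\<rat>. 0 \<le> r}.
      if snd x \<le> lam0 * r + (max lam0 (fst x) - lam0) * (1 - exp (- d * r)) / d then ereal r else \<infinity>)"
    by (auto simp: tmap_rat Lam_closed intro!: INF_cong)
  have c: "countable {r\<in>\<rat>. (0::real) \<le> r}" by (rule countable_subset[OF _ countable_rat]) auto
  show ?thesis unfolding eq by (rule borel_measurable_INF[OF c]) measurable
qed

lemma tmap_meas1: assumes "l \<ge> lam0" shows "tmap l \<in> borel_measurable borel"
proof -
  have "(\<lambda>E. (\<lambda>(l, E). tmap (max lam0 l) E) (l, E)) \<in> borel_measurable borel"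
    by (rule measurable_compose[OF _ tmap_meas]) simp
  then show ?thesis using assms by (simp add: max_def)
qed

lemma sets_tau[measurable_cong]: "sets (tau_law lam0 d l) = sets (borel :: ereal measure)"
  unfolding tau_law_def by simp

lemma sets_TL[measurable_cong]: "sets (T_law beta) = sets (borel :: real measure)"
  unfolding T_law_def by simp

lemma sets_Om: "sets (Om l) = sets ((borel \<Otimes>\<^sub>M borel) \<Otimes>\<^sub>M (borel \<Otimes>\<^sub>M borel))"
  unfolding Omega_def
  by (rule sets_pair_measure_cong sets_tau sets_TL sFU sFY)+

lemma space_Om: "space (Om l) = UNIV"
  by (subst sets_eq_imp_space_eq[OF sets_Om[of l]]) (simp add: space_pair_measure)

lemma sets_Ex: "sets EX1 = sets borel" by simp

lemma prob_Ex: "prob_space EX1" by (rule prob_space_exponential_density) simp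

lemma prob_tau: assumes "l \<ge> lam0" shows "prob_space (tau_law lam0 d l)"
proof -
  interpret E: prob_space EX1 by (rule prob_Ex)
  have "tmap l \<in> measurable EX1 borel"
    using tmap_meas1[OF assms] measurable_cong_sets[OF sets_Ex refl, of borel] by blast
  then show ?thesis unfolding tau_law_def by (rule E.prob_space_distr)
qed

lemma prob_TL: "prob_space (T_law beta)"
  unfolding T_law_def using beta by (rule prob_space_exponential_density)

lemma prob_Om: assumes "l \<ge> lam0" shows "prob_space (Om l)"
proof -
  interpret A: prob_space "tau_law lam0 d l" by (rule prob_tau[OF assms])
  interpret B: prob_space "T_law beta" by (rule prob_TL)
  interpret C: prob_space FU by (rule FU)
  interpret D: prob_space FY by (rule FY)
  interpret AC: pair_prob_space "tau_law lam0 d l" FU ..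
  interpret BD: pair_prob_space "T_law beta" FY ..
  interpret X: pair_prob_space "tau_law lam0 d l \<Otimes>\<^sub>M FU" "T_law beta \<Otimes>\<^sub>M FY" ..
  show ?thesis unfolding Omega_def by (rule X.prob_space_axioms)
qed

declare sFU[measurable_cong] sFY[measurable_cong]

lemma AE_fst_lift:
  assumes "sigma_finite_measure M" "sigma_finite_measure N" "AE x in M. P x" "Measurable.pred M P"
  shows "AE z in M \<Otimes>\<^sub>M N. P (fst z)"
proof -
  interpret M: sigma_finite_measure M by fact
  interpret N: sigma_finite_measure N by fact
  interpret pair_sigma_finite M N ..
  show ?thesis
  proof (rule AE_pair_measure)
    show "{x \<in> space (M \<Otimes>\<^sub>M N). P (fst x)} \<in> sets (M \<Otimes>\<^sub>M N)" using assms(4) by measurable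
    show "AE x in M. AE y in N. P (fst (x, y))"
      by (rule AE_mp[OF assms(3)]) (auto intro!: AE_I2)
  qed
qed

lemma AE_snd_lift:
  assumes "sigma_finite_measure M" "sigma_finite_measure N" "AE x in N. P x" "Measurable.pred N P"
  shows "AE z in M \<Otimes>\<^sub>M N. P (snd z)"
proof -
  interpret M: sigma_finite_measure M by fact
  interpret N: sigma_finite_measure N by fact
  interpret pair_sigma_finite M N ..
  show ?thesis
  proof (rule AE_pair_measure)
    show "{x \<in> space (M \<Otimes>\<^sub>M N). P (snd x)} \<in> sets (M \<Otimes>\<^sub>M N)" using assms(4) by measurable
    show "AE x in M. AE y in N. P (snd (x, y))" using assms(3) by simp
  qed
qed

lemma sf_tau: "l \<ge> lam0 \<Longrightarrow> sigma_finite_measure (tau_law lam0 d l)"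
  using prob_tau by (simp add: prob_space_imp_sigma_finite)
lemma sf_TL: "sigma_finite_measure (T_law beta)"
  using prob_TL by (simp add: prob_space_imp_sigma_finite)
lemma sf_FU: "sigma_finite_measure FU"
  using FU by (simp add: prob_space_imp_sigma_finite)
lemma sf_FY: "sigma_finite_measure FY"
  using FY by (simp add: prob_space_imp_sigma_finite)
lemma sf_A: "l \<ge> lam0 \<Longrightarrow> sigma_finite_measure (tau_law lam0 d l \<Otimes>\<^sub>M FU)"
  using prob_tau FU by (simp add: prob_space_imp_sigma_finite prob_space_pair)
lemma sf_B: "sigma_finite_measure (T_law beta \<Otimes>\<^sub>M FY)"
  using prob_TL FY by (simp add: prob_space_imp_sigma_finite prob_space_pair)

lemma AE_TL: "AE T in T_law beta. 0 \<le> T \<and> T \<noteq> delta"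
proof -
  have "AE T in lborel. T \<noteq> delta" by (rule AE_lborel_singleton)
  then show ?thesis unfolding T_law_def
    by (subst AE_density) (auto elim!: AE_mp simp: exponential_density_def split: if_splits)
qed

lemma AE_T: assumes "l \<ge> lam0" shows "AE \<omega> in Om l. 0 \<le> fst (snd \<omega>) \<and> fst (snd \<omega>) \<noteq> delta"
  unfolding Omega_def
  by (intro AE_snd_lift[of _ _ "\<lambda>z. 0 \<le> fst z \<and> fst z \<noteq> delta"] sf_A assms sf_B
      AE_fst_lift[of _ _ "\<lambda>T. 0 \<le> T \<and> T \<noteq> delta"] sf_TL sf_FY AE_TL)
     (auto simp: sets_TL)

lemma AE_Y: assumes "l \<ge> lam0" shows "AE \<omega> in Om l. 0 < snd (snd \<omega>)"
  unfolding Omega_def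
  by (intro AE_snd_lift[of _ _ "\<lambda>z. 0 < snd z"] sf_A assms sf_B
      AE_snd_lift[of _ _ "\<lambda>T. 0 < T"] sf_TL sf_FY FYpos)
     (auto simp: sFY)

lemma AE_U: assumes "l \<ge> lam0" shows "AE \<omega> in Om l. 0 < snd (fst \<omega>)"
  unfolding Omega_def
  by (intro AE_fst_lift[of _ _ "\<lambda>z. 0 < snd z"] sf_A assms sf_B
      AE_snd_lift[of _ _ "\<lambda>T. 0 < T"] sf_tau sf_FU FUpos)
     (auto simp: sFU sets_tau)

lemma AE_tau_law: assumes l: "l \<ge> lam0" shows "AE \<tau> in tau_law lam0 d l. \<tau> \<noteq> ereal delta"
proof -
  have m: "tmap l \<in> measurable EX1 borel"
    using tmap_meas1[OF l] measurable_cong_sets[OF sets_Ex refl, of borel] by blast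
  have "AE E in lborel. E \<noteq> Lam lam0 d l delta" by (rule AE_lborel_singleton)
  then have "AE E in EX1. E \<noteq> Lam lam0 d l delta"
    by (subst AE_density) (auto elim!: AE_mp)
  then have "AE E in EX1. tmap l E \<noteq> ereal delta"
    by (rule AE_mp) (auto dest: tmap_eq[OF l delta])
  then show ?thesis unfolding tau_law_def
    by (subst AE_distr_iff[OF m]) auto
qed

lemma AE_tau: assumes "l \<ge> lam0" shows "AE \<omega> in Om l. fst (fst \<omega>) \<noteq> ereal delta"
  unfolding Omega_def
  by (intro AE_fst_lift[of _ _ "\<lambda>z. fst z \<noteq> ereal delta"] sf_A assms sf_B
      AE_fst_lift[of _ _ "\<lambda>T. T \<noteq> ereal delta"] sf_tau sf_FU AE_tau_law)
     (auto simp: sets_tau)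

lemma AE_Ttau: assumes l: "l \<ge> lam0" shows "AE \<omega> in Om l. ereal (fst (snd \<omega>)) \<noteq> fst (fst \<omega>)"
proof -
  interpret A: sigma_finite_measure "tau_law lam0 d l \<Otimes>\<^sub>M FU" by (rule sf_A[OF l])
  interpret B: sigma_finite_measure "T_law beta \<Otimes>\<^sub>M FY" by (rule sf_B)
  interpret pair_sigma_finite "tau_law lam0 d l \<Otimes>\<^sub>M FU" "T_law beta \<Otimes>\<^sub>M FY" ..
  show ?thesis unfolding Omega_def
  proof (rule AE_pair_measure)
    show "{x \<in> space ((tau_law lam0 d l \<Otimes>\<^sub>M FU) \<Otimes>\<^sub>M (T_law beta \<Otimes>\<^sub>M FY)).
       ereal (fst (snd x)) \<noteq> fst (fst x)} \<in> sets ((tau_law lam0 d l \<Otimes>\<^sub>M FU) \<Otimes>\<^sub>M (T_law beta \<Otimes>\<^sub>M FY))"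
      using sets_Om[of l] unfolding Omega_def[symmetric] by measurable
    show "AE x in tau_law lam0 d l \<Otimes>\<^sub>M FU. AE y in T_law beta \<Otimes>\<^sub>M FY. ereal (fst (snd (x, y))) \<noteq> fst (fst (x, y))"
    proof (rule AE_I2)
      fix x :: "ereal \<times> real"
      have "AE T in lborel. T \<noteq> real_of_ereal (fst x)" by (rule AE_lborel_singleton)
      moreover have "\<forall>T. T \<noteq> real_of_ereal (fst x) \<longrightarrow> ereal T \<noteq> fst x" by (cases "fst x") auto
      ultimately have "AE T in T_law beta. ereal T \<noteq> fst x" unfolding T_law_def
        by (subst AE_density) (auto elim!: AE_mp)
      then show "AE y in T_law beta \<Otimes>\<^sub>M FY. ereal (fst (snd (x, y))) \<noteq> fst (fst (x, y))"
        using AE_fst_lift[OF sf_TL sf_FY, of "\<lambda>T. ereal T \<noteq> fst x"] by simp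
    qed
  qed
qed

definition F1 :: "(real \<Rightarrow> real \<Rightarrow> ennreal) \<Rightarrow> real \<Rightarrow> real \<Rightarrow> (ereal \<times> real) \<times> (real \<times> real) \<Rightarrow> ennreal" where
  "F1 w x l = (\<lambda>((\<tau>, U), (T, Y)). of_bool (min (ereal delta) (min (ereal T) \<tau>) = ereal delta)
       * (ennreal (exp (- q * delta)) * w (x + p * delta) (lamc lam0 d l delta)))"

definition F2 :: "(real \<Rightarrow> real \<Rightarrow> ennreal) \<Rightarrow> real \<Rightarrow> real \<Rightarrow> (ereal \<times> real) \<times> (real \<times> real) \<Rightarrow> ennreal" where
  "F2 w x l = (\<lambda>((\<tau>, U), (T, Y)).
        (let s = real_of_ereal \<tau>; y = x + p * s - U in
          of_bool (min (ereal delta) (min (ereal T) \<tau>) = \<tau> \<and> 0 \<le> y)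
          * ennreal (exp (- q * s))
          * (w (rho p delta y) (lamc lam0 d l s) + ennreal (y - rho p delta y))))"

definition F3 :: "(real \<Rightarrow> real \<Rightarrow> ennreal) \<Rightarrow> real \<Rightarrow> real \<Rightarrow> (ereal \<times> real) \<times> (real \<times> real) \<Rightarrow> ennreal" where
  "F3 w x l = (\<lambda>((\<tau>, U), (T, Y)).
          of_bool (min (ereal delta) (min (ereal T) \<tau>) = ereal T)
          * ennreal (exp (- q * T))
          * (w x (lamc lam0 d l T + Y) + ennreal (p * T)))"

lemma rho_meas[measurable]: "rho p delta \<in> borel_measurable borel"
  unfolding rho_def by measurable

lemma meas_w_rho:
  assumes w: "\<And>x. (\<lambda>l. w x l) \<in> borel_measurable borel"
    and g: "g \<in> borel_measurable M" and h: "h \<in> borel_measurable M"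
  shows "(\<lambda>z. w (rho p delta (g z)) (h z)) \<in> borel_measurable M"
proof -
  have "(\<lambda>z. (\<lambda>i z. w (real i * p * delta) (h z)) (nat \<lfloor>g z / (p * delta)\<rfloor>) z) \<in> borel_measurable M"
  proof (rule measurable_compose_countable'[where f="\<lambda>i z. w (real i * p * delta) (h z)" and g="\<lambda>z. nat \<lfloor>g z / (p * delta)\<rfloor>" and I=UNIV])
    fix i :: nat
    show "(\<lambda>z. w (real i * p * delta) (h z)) \<in> borel_measurable M"
      using measurable_compose[OF h w] by simp
  next
    show "(\<lambda>z. nat \<lfloor>g z / (p * delta)\<rfloor>) \<in> measurable M (count_space UNIV)"
      using g by measurable
  qed auto
  then show ?thesis unfolding rho_def .
qed

lemma meas_F:
  assumes w: "\<And>x. (\<lambda>l. w x l) \<in> borel_measurable borel"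
    and L: "L \<in> borel_measurable M"
    and ta: "ta \<in> borel_measurable M" and U: "U \<in> borel_measurable M"
    and T: "T \<in> borel_measurable M" and Y: "Y \<in> borel_measurable M"
  shows "(\<lambda>z. F1 w x (L z) ((ta z, U z), (T z, Y z))) \<in> borel_measurable M"
    and "(\<lambda>z. F2 w x (L z) ((ta z, U z), (T z, Y z))) \<in> borel_measurable M"
    and "(\<lambda>z. F3 w x (L z) ((ta z, U z), (T z, Y z))) \<in> borel_measurable M"
proof -
  note [measurable] = L ta U T Y
  have [measurable]: "(\<lambda>l. w y l) \<in> borel_measurable borel" for y using w .
  show "(\<lambda>z. F1 w x (L z) ((ta z, U z), (T z, Y z))) \<in> borel_measurable M"
    unfolding F1_def lamc_def of_bool_def by simp measurable
  have [measurable]: "(\<lambda>z. w (rho p delta (x + p * real_of_ereal (ta z) - U z)) (lamc lam0 d (L z) (real_of_ereal (ta z)))) \<in> borel_measurable M"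
    by (rule meas_w_rho[OF w]) (unfold lamc_def, measurable)
  have [measurable]: "Measurable.pred M (\<lambda>z. min (ereal delta) (min (ereal (T z)) (ta z)) = ta z \<and> 0 \<le> x + p * real_of_ereal (ta z) - U z)"
    by measurable
  have [measurable]: "(\<lambda>z. of_bool (min (ereal delta) (min (ereal (T z)) (ta z)) = ta z \<and> 0 \<le> x + p * real_of_ereal (ta z) - U z) :: ennreal) \<in> borel_measurable M"
    unfolding of_bool_def by measurable
  show "(\<lambda>z. F2 w x (L z) ((ta z, U z), (T z, Y z))) \<in> borel_measurable M"
    unfolding F2_def Let_def prod.case by measurable
  show "(\<lambda>z. F3 w x (L z) ((ta z, U z), (T z, Y z))) \<in> borel_measurable M"
    unfolding F3_def lamc_def of_bool_def by simp measurable
qed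

lemma meas_Om_cong: "f \<in> measurable ((borel \<Otimes>\<^sub>M borel) \<Otimes>\<^sub>M (borel \<Otimes>\<^sub>M borel)) N \<Longrightarrow> f \<in> measurable (Om l) N"
  using measurable_cong_sets[OF sets_Om[of l] refl, of N] by blast

lemma meas_F_Om:
  assumes w: "\<And>x. (\<lambda>l. w x l) \<in> borel_measurable borel"
  shows "F1 w x l \<in> borel_measurable (Om l)" "F2 w x l \<in> borel_measurable (Om l)" "F3 w x l \<in> borel_measurable (Om l)"
proof -
  let ?M = "(borel \<Otimes>\<^sub>M borel) \<Otimes>\<^sub>M (borel \<Otimes>\<^sub>M borel) :: ((ereal \<times> real) \<times> (real \<times> real)) measure"
  have m: "(\<lambda>z. l) \<in> borel_measurable ?M" "(\<lambda>z. fst (fst z)) \<in> borel_measurable ?M" "(\<lambda>z. snd (fst z)) \<in> borel_measurable ?M"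
     "(\<lambda>z. fst (snd z)) \<in> borel_measurable ?M" "(\<lambda>z. snd (snd z)) \<in> borel_measurable ?M" by measurable
  note r = meas_F[OF w m, where x=x]
  show "F1 w x l \<in> borel_measurable (Om l)" using r(1) by (intro meas_Om_cong) simp
  show "F2 w x l \<in> borel_measurable (Om l)" using r(2) by (intro meas_Om_cong) simp
  show "F3 w x l \<in> borel_measurable (Om l)" using r(3) by (intro meas_Om_cong) simp
qed

lemma T0_eq:
  assumes w: "\<And>x. (\<lambda>l. w x l) \<in> borel_measurable borel"
  shows "T0 p q d beta lam0 FU FY delta w x l = (\<integral>\<^sup>+ \<omega>. F1 w x l \<omega> + F2 w x l \<omega> + F3 w x l \<omega> \<partial>Om l)"
proof -
  note m = meas_F_Om[OF w, where x=x and l=l]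
  let ?S = "{((\<tau>, U), (T, Y)) \<in> space (Om l). min (ereal delta) (min (ereal T) \<tau>) = ereal delta}"
  have S: "?S \<in> sets (Om l)"
  proof -
    have "?S = {\<omega> \<in> space (Om l). min (ereal delta) (min (ereal (fst (snd \<omega>))) (fst (fst \<omega>))) = ereal delta}"
      by auto
    also have "\<dots> \<in> sets (Om l)" using sets_Om[of l] by measurable
    finally show ?thesis .
  qed
  have "(\<integral>\<^sup>+ \<omega>. F1 w x l \<omega> \<partial>Om l) = (\<integral>\<^sup>+ \<omega>. (ennreal (exp (- q * delta)) * w (x + p * delta) (lamc lam0 d l delta)) * indicator ?S \<omega> \<partial>Om l)"
    by (intro nn_integral_cong) (auto simp: F1_def space_Om indicator_def mult.commute)
  also have "\<dots> = ennreal (exp (- q * delta)) * w (x + p * delta) (lamc lam0 d l delta) * emeasure (Om l) ?S"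
    by (rule nn_integral_cmult_indicator[OF S])
  finally have 1: "(\<integral>\<^sup>+ \<omega>. F1 w x l \<omega> \<partial>Om l) = emeasure (Om l) ?S * ennreal (exp (- q * delta)) * w (x + p * delta) (lamc lam0 d l delta)"
    by (simp add: mult_ac)
  have "(\<integral>\<^sup>+ \<omega>. F1 w x l \<omega> + F2 w x l \<omega> + F3 w x l \<omega> \<partial>Om l)
      = (\<integral>\<^sup>+ \<omega>. F1 w x l \<omega> \<partial>Om l) + (\<integral>\<^sup>+ \<omega>. F2 w x l \<omega> \<partial>Om l) + (\<integral>\<^sup>+ \<omega>. F3 w x l \<omega> \<partial>Om l)"
    using m by (simp add: nn_integral_add)
  also have "\<dots> = T0 p q d beta lam0 FU FY delta w x l"
    unfolding 1 T0_def F2_def F3_def by simp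
  finally show ?thesis ..
qed

definition cut :: "(real \<Rightarrow> real \<Rightarrow> ennreal) \<Rightarrow> real \<Rightarrow> real \<Rightarrow> ennreal" where
  "cut w x l = (if x \<in> grid p delta then w x (max lam0 l) else 0)"

lemma grid_nonneg: "x \<in> grid p delta \<Longrightarrow> 0 \<le> x"
  using p delta by (auto simp: grid_def)

lemma grid_add: assumes "x \<in> grid p delta" shows "x + p * delta \<in> grid p delta"
proof -
  obtain n :: nat where n: "x = real n * p * delta" using assms(1) by (auto simp: grid_def)
  then have "x + p * delta = real (Suc n) * p * delta" by (simp add: algebra_simps)
  then show ?thesis unfolding grid_def by blast
qed

lemma grid_sub: assumes "x \<in> grid p delta" "p * delta \<le> x" shows "x - p * delta \<in> grid p delta"
proof -
  obtain n :: nat where n: "x = real n * p * delta" using assms(1) by (auto simp: grid_def)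
  have "n \<ge> 1"
  proof (rule ccontr)
    assume "\<not> n \<ge> 1" then have "n = 0" by simp
    moreover have "p * delta > 0" using p delta by simp
    ultimately show False using assms(2) n by simp
  qed
  then have "x - p * delta = real (n - 1) * p * delta" using n by (simp add: of_nat_diff algebra_simps)
  then show ?thesis unfolding grid_def by blast
qed

lemma rho_grid: "rho p delta y \<in> grid p delta"
  unfolding grid_def rho_def by blast

lemma rho_le: assumes "0 \<le> y" shows "rho p delta y \<le> y" "0 \<le> rho p delta y"
proof -
  have pd: "p * delta > 0" using p delta by simp
  have "real_of_int \<lfloor>y / (p * delta)\<rfloor> \<le> y / (p * delta)" by simp
  moreover have "\<lfloor>y / (p * delta)\<rfloor> \<ge> 0" using assms pd by simp
  ultimately have "real (nat \<lfloor>y / (p * delta)\<rfloor>) \<le> y / (p * delta)" by simp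
  then have "real (nat \<lfloor>y / (p * delta)\<rfloor>) * (p * delta) \<le> y" using pd by (simp add: pos_le_divide_eq)
  then show "rho p delta y \<le> y" unfolding rho_def by (simp add: mult.assoc)
  show "0 \<le> rho p delta y" unfolding rho_def using p delta by simp
qed

lemma cut_eq: "x \<in> grid p delta \<Longrightarrow> lam0 \<le> l \<Longrightarrow> cut w x l = w x l"
  unfolding cut_def by (simp add: max_def)

lemma meas_cut:
  assumes "\<And>x. x \<in> grid p delta \<Longrightarrow> (\<lambda>l. w x l) \<in> borel_measurable (restrict_space borel {lam0..})"
  shows "(\<lambda>l. cut w x l) \<in> borel_measurable borel"
proof (cases "x \<in> grid p delta")
  case True
  have "(\<lambda>l. max lam0 l) \<in> measurable borel (restrict_space borel {lam0..})"
    by (rule measurable_restrict_space2) auto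
  from measurable_compose[OF this assms[OF True]] show ?thesis unfolding cut_def using True by simp
qed (simp add: cut_def)

lemma T0_cut:
  assumes x: "x \<in> grid p delta" and l: "lam0 \<le> l"
  shows "T0 p q d beta lam0 FU FY delta w x l = T0 p q d beta lam0 FU FY delta (cut w) x l"
proof -
  have 1: "cut w (x + p * delta) (lamc lam0 d l delta) = w (x + p * delta) (lamc lam0 d l delta)"
    using x l by (intro cut_eq grid_add lamc_ge) auto
  have 2: "cut w (rho p delta y) (lamc lam0 d l s) = w (rho p delta y) (lamc lam0 d l s)" for y s
    using l by (intro cut_eq rho_grid lamc_ge) auto
  have 3: "(\<integral>\<^sup>+ ((\<tau>, U), (T, Y)).
          of_bool (min (ereal delta) (min (ereal T) \<tau>) = ereal T)
          * ennreal (exp (- q * T))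
          * (w x (lamc lam0 d l T + Y) + ennreal (p * T)) \<partial>Om l) =
        (\<integral>\<^sup>+ ((\<tau>, U), (T, Y)).
          of_bool (min (ereal delta) (min (ereal T) \<tau>) = ereal T)
          * ennreal (exp (- q * T))
          * (cut w x (lamc lam0 d l T + Y) + ennreal (p * T)) \<partial>Om l)"
  proof -
    have mx: "0 < Y \<Longrightarrow> max lam0 (lamc lam0 d l T + Y) = lamc lam0 d l T + Y" for T Y
      using lamc_ge[OF l, of T] by simp
    show ?thesis
      apply (rule nn_integral_cong_AE, rule AE_mp[OF AE_Y[OF l]], rule AE_I2)
      using x by (auto simp: cut_def mx split: prod.splits)
  qed
  show ?thesis unfolding T0_def 1 2 3 ..
qed

lemma T0_mono: "(\<And>x l. w x l \<le> w' x l) \<Longrightarrow> T0 p q d beta lam0 FU FY delta w x l \<le> T0 p q d beta lam0 FU FY delta w' x l"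
  unfolding T0_def
  by (intro add_mono mult_left_mono nn_integral_mono) (auto split: prod.splits intro!: mult_left_mono add_mono simp: Let_def)

lemma T0_le_Top: "T0 p q d beta lam0 FU FY delta w x l \<le> Top p q d beta lam0 FU FY delta w x l"
  unfolding Top_def by (auto simp: le_max_iff_disj)
lemma T1_le_Top: "p * delta \<le> x \<Longrightarrow> T1 p delta w x l \<le> Top p q d beta lam0 FU FY delta w x l"
  unfolding Top_def by (auto simp: le_max_iff_disj)
lemma TF_le_Top: "TF x l \<le> Top p q d beta lam0 FU FY delta w x l"
  unfolding Top_def by (auto simp: le_max_iff_disj)

lemma Top_mono: "(\<And>x l. w x l \<le> w' x l) \<Longrightarrow> Top p q d beta lam0 FU FY delta w x l \<le> Top p q d beta lam0 FU FY delta w' x l"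
proof -
  assume w: "\<And>x l. w x l \<le> w' x l"
  have a: "T0 p q d beta lam0 FU FY delta w x l \<le> T0 p q d beta lam0 FU FY delta w' x l" using T0_mono[OF w] .
  have b: "T1 p delta w x l \<le> T1 p delta w' x l" unfolding T1_def using w by (intro add_mono) auto
  show ?thesis unfolding Top_def
    using max.mono[OF max.mono[OF a b] order.refl[of "TF x l"]] max.mono[OF a order.refl[of "TF x l"]] by simp
qed

end


context setting
begin

definition Gfun :: "((real \<times> real \<times> real) list \<Rightarrow> ennreal) \<Rightarrow> real \<Rightarrow> real \<Rightarrow> real \<Rightarrow> (real \<times> real \<times> real) list
   \<Rightarrow> (ereal \<times> real) \<times> (real \<times> real) \<Rightarrow> ennreal" where
  "Gfun J' x l t h = (\<lambda>((\<tau>, U), (T, Y)).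
           (if ereal delta < \<tau> \<and> delta < T then
              J' ((x + p * delta, lamc lam0 d l delta, t + delta) # h)
            else if \<tau> \<le> ereal delta \<and> \<tau> \<le> ereal T then
              (let s = real_of_ereal \<tau>; y = x + p * s - U in
                if y < 0 then 0
                else ennreal (exp (- q * (t + s)) * (y - rho p delta y))
                     + J' ((rho p delta y, lamc lam0 d l s, t + s) # h))
            else if ereal T < \<tau> \<and> T < delta then
              ennreal (exp (- q * (t + T)) * (p * T))
              + J' ((x, lamc lam0 d l T + Y, t + T) # h)
            else 0))"

lemma Jn_E0: "hd h = (x, l, t) \<Longrightarrow> \<pi> h = E0 \<Longrightarrow>
  Jn p q d beta lam0 FU FY delta \<pi> (Suc n) h = (\<integral>\<^sup>+ \<omega>. Gfun (Jn p q d beta lam0 FU FY delta \<pi> n) x l t h \<omega> \<partial>Om l)"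
  by (simp add: Gfun_def)

lemma Jn_E1: "hd h = (x, l, t) \<Longrightarrow> \<pi> h = E1 \<Longrightarrow>
  Jn p q d beta lam0 FU FY delta \<pi> (Suc n) h = ennreal (exp (- q * t) * (p * delta))
               + Jn p q d beta lam0 FU FY delta \<pi> n ((x - p * delta, l, t) # h)"
  by simp

lemma Jn_EF: "hd h = (x, l, t) \<Longrightarrow> \<pi> h = EF \<Longrightarrow>
  Jn p q d beta lam0 FU FY delta \<pi> (Suc n) h = ennreal (exp (- q * t) * x)"
  by simp

lemma emult: "ennreal (exp (- (q * (t + a)))) = ennreal (exp (- (q * t))) * ennreal (exp (- (q * a)))"
  by (simp add: ennreal_mult[symmetric] exp_add[symmetric] algebra_simps)

lemma emult': "ennreal (exp (- (q * (t + a))) * b) = ennreal (exp (- (q * t))) * ennreal (exp (- (q * a))) * ennreal b"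
proof -
  have "ennreal (exp (- (q * (t + a))) * b) = ennreal (exp (- (q * (t + a)))) * ennreal b"
    by (rule ennreal_mult') simp
  then show ?thesis by (simp add: emult)
qed

lemma emult2: "ennreal (exp (- q * (t + a))) = ennreal (exp (- (q * t))) * ennreal (exp (- (q * a)))"
  using emult by simp

lemma emult2': "ennreal (exp (- q * (t + a)) * b) = ennreal (exp (- (q * t))) * ennreal (exp (- (q * a))) * ennreal b"
  using emult' by simp

lemma G_le:
  assumes IH: "\<And>x' l' t'. x' \<in> grid p delta \<Longrightarrow> lam0 \<le> l' \<Longrightarrow>
        J' ((x', l', t') # h) \<le> ennreal (exp (- q * t')) * v x' l'"
    and x: "x \<in> grid p delta" and l: "lam0 \<le> l" and Y: "0 \<le> snd (snd \<omega>)"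
  shows "Gfun J' x l t h \<omega> \<le> ennreal (exp (- q * t)) * (F1 (cut v) x l \<omega> + F2 (cut v) x l \<omega> + F3 (cut v) x l \<omega>)"
proof -
  obtain \<tau> U T Y where o: "\<omega> = ((\<tau>, U), (T, Y))" by (metis prod.collapse)
  have Y0: "0 \<le> Y" using Y o by simp
  let ?e = "\<lambda>a. ennreal (exp (- q * a))"
  let ?R = "F1 (cut v) x l \<omega> + F2 (cut v) x l \<omega> + F3 (cut v) x l \<omega>"
  consider (c1) "ereal delta < \<tau> \<and> delta < T"
    | (c2) "\<not> (ereal delta < \<tau> \<and> delta < T)" "\<tau> \<le> ereal delta \<and> \<tau> \<le> ereal T"
    | (c3) "\<not> (ereal delta < \<tau> \<and> delta < T)" "\<not> (\<tau> \<le> ereal delta \<and> \<tau> \<le> ereal T)" "ereal T < \<tau> \<and> T < delta"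
    | (c4) "\<not> (ereal delta < \<tau> \<and> delta < T)" "\<not> (\<tau> \<le> ereal delta \<and> \<tau> \<le> ereal T)" "\<not> (ereal T < \<tau> \<and> T < delta)"
    by blast
  then show ?thesis
  proof cases
    case c1
    have "Gfun J' x l t h \<omega> = J' ((x + p * delta, lamc lam0 d l delta, t + delta) # h)"
      using c1 by (simp add: Gfun_def o)
    also have "\<dots> \<le> ?e (t + delta) * v (x + p * delta) (lamc lam0 d l delta)"
      using x l by (intro IH grid_add lamc_ge) auto
    also have "\<dots> = ?e t * F1 (cut v) x l \<omega>"
      using c1 x l less_imp_le[of "ereal delta" \<tau>] by (simp add: F1_def o emult cut_eq grid_add lamc_ge min_def mult.assoc)
    also have "\<dots> \<le> ?e t * ?R" by (intro mult_left_mono) auto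
    finally show ?thesis .
  next
    case c2
    have nt1: "\<not> ereal delta < \<tau>" using c2 by (auto simp: not_less)
    define s where "s = real_of_ereal \<tau>"
    define y where "y = x + p * s - U"
    show ?thesis
    proof (cases "y < 0")
      case True
      then have "Gfun J' x l t h \<omega> = 0" using c2 nt1 by (simp add: Gfun_def o s_def y_def Let_def)
      then show ?thesis by simp
    next
      case False
      then have y0: "0 \<le> y" by simp
      have ny: "\<not> x + p * s < U" using False y_def by simp
      have "Gfun J' x l t h \<omega> = ennreal (exp (- q * (t + s)) * (y - rho p delta y))
                     + J' ((rho p delta y, lamc lam0 d l s, t + s) # h)"
        using c2 nt1 False ny by (simp add: Gfun_def o s_def[symmetric] y_def[symmetric] Let_def)
      also have "\<dots> \<le> ennreal (exp (- q * (t + s)) * (y - rho p delta y)) + ?e (t + s) * v (rho p delta y) (lamc lam0 d l s)"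
        using l by (intro add_left_mono IH rho_grid lamc_ge) auto
      also have "\<dots> = ?e t * F2 (cut v) x l \<omega>"
      proof -
        have ind: "min (ereal delta) (min (ereal T) \<tau>) = \<tau>" using c2 by (auto simp: min_def)
        have F2v: "F2 (cut v) x l \<omega> = ?e s * (cut v (rho p delta y) (lamc lam0 d l s) + ennreal (y - rho p delta y))"
          unfolding F2_def o prod.case Let_def s_def[symmetric] y_def[symmetric] using ind y0 by simp
        have cv: "cut v (rho p delta y) (lamc lam0 d l s) = v (rho p delta y) (lamc lam0 d l s)"
          using l by (intro cut_eq rho_grid lamc_ge) auto
        show ?thesis unfolding F2v cv emult emult' emult2 emult2' by (simp add: algebra_simps)
      qed
      also have "\<dots> \<le> ?e t * ?R" by (intro mult_left_mono) auto
      finally show ?thesis .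
    qed
  next
    case c3
    have "Gfun J' x l t h \<omega> = ennreal (exp (- q * (t + T)) * (p * T)) + J' ((x, lamc lam0 d l T + Y, t + T) # h)"
    proof -
      have "\<not> \<tau> \<le> ereal T" "\<not> delta < T" using c3 by (auto simp: not_le)
      then show ?thesis using c3 by (simp add: Gfun_def o)
    qed
    also have "\<dots> \<le> ennreal (exp (- q * (t + T)) * (p * T)) + ?e (t + T) * v x (lamc lam0 d l T + Y)"
      using x l Y0 lamc_ge[OF l, of T] by (intro add_left_mono IH) auto
    also have "\<dots> = ?e t * F3 (cut v) x l \<omega>"
    proof -
      have ind: "min (ereal delta) (min (ereal T) \<tau>) = ereal T" using c3 by (auto simp: min_def)
      have F3v: "F3 (cut v) x l \<omega> = ?e T * (cut v x (lamc lam0 d l T + Y) + ennreal (p * T))"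
        unfolding F3_def o prod.case using ind by simp
      have cv: "cut v x (lamc lam0 d l T + Y) = v x (lamc lam0 d l T + Y)"
        using x l Y0 lamc_ge[OF l, of T] by (intro cut_eq) auto
      show ?thesis unfolding F3v cv emult emult' emult2 emult2' by (simp add: algebra_simps)
    qed
    also have "\<dots> \<le> ?e t * ?R" by (intro mult_left_mono) auto
    finally show ?thesis .
  next
    case c4
    have "Gfun J' x l t h \<omega> = 0"
      unfolding Gfun_def o prod.case if_not_P[OF c4(1)] if_not_P[OF c4(2)] if_not_P[OF c4(3)] ..
    then show ?thesis by simp
  qed
qed

lemma G_ge:
  assumes IH: "\<And>x' l' t'. x' \<in> grid p delta \<Longrightarrow> lam0 \<le> l' \<Longrightarrow>
        ennreal (exp (- q * t')) * v x' l' \<le> J' ((x', l', t') # h)"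
    and x: "x \<in> grid p delta" and l: "lam0 \<le> l" and Y: "0 \<le> snd (snd \<omega>)"
    and nt: "fst (fst \<omega>) \<noteq> ereal delta" "fst (snd \<omega>) \<noteq> delta" "ereal (fst (snd \<omega>)) \<noteq> fst (fst \<omega>)"
  shows "ennreal (exp (- q * t)) * (F1 (cut v) x l \<omega> + F2 (cut v) x l \<omega> + F3 (cut v) x l \<omega>) \<le> Gfun J' x l t h \<omega>"
proof -
  obtain \<tau> U T Y where o: "\<omega> = ((\<tau>, U), (T, Y))" by (metis prod.collapse)
  have Y0: "0 \<le> Y" using Y o by simp
  have n1: "\<tau> \<noteq> ereal delta" "T \<noteq> delta" "ereal T \<noteq> \<tau>" using nt o by auto
  let ?e = "\<lambda>a. ennreal (exp (- q * a))"
  let ?R = "F1 (cut v) x l \<omega> + F2 (cut v) x l \<omega> + F3 (cut v) x l \<omega>"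
  have "(ereal delta < \<tau> \<and> delta < T) \<or> (\<tau> < ereal delta \<and> \<tau> < ereal T) \<or> (ereal T < \<tau> \<and> T < delta)"
  proof (cases \<tau>)
    case (real r) with n1 show ?thesis by simp linarith
  next
    case PInf with n1 show ?thesis by simp linarith
  next
    case MInf with n1 show ?thesis by simp
  qed
  then consider (c1) "ereal delta < \<tau> \<and> delta < T"
    | (c2) "\<tau> < ereal delta \<and> \<tau> < ereal T"
    | (c3) "ereal T < \<tau> \<and> T < delta" by blast
  then show ?thesis
  proof cases
    case c1
    have ind: "min (ereal delta) (min (ereal T) \<tau>) = ereal delta" using c1 by (auto simp: min_def)
    have F2v: "F2 (cut v) x l \<omega> = 0" unfolding F2_def o prod.case Let_def ind using n1 by simp
    have F3v: "F3 (cut v) x l \<omega> = 0" unfolding F3_def o prod.case ind using n1 by simp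
    have F1v: "F1 (cut v) x l \<omega> = ?e delta * v (x + p * delta) (lamc lam0 d l delta)"
      unfolding F1_def o prod.case ind using x l by (simp add: cut_eq grid_add lamc_ge)
    have "?e t * ?R = ?e (t + delta) * v (x + p * delta) (lamc lam0 d l delta)"
      unfolding F1v F2v F3v emult2 by (simp add: mult_ac)
    also have "\<dots> \<le> J' ((x + p * delta, lamc lam0 d l delta, t + delta) # h)"
      using x l by (intro IH grid_add lamc_ge) auto
    also have "\<dots> = Gfun J' x l t h \<omega>"
      using c1 by (simp add: Gfun_def o)
    finally show ?thesis .
  next
    case c2
    have nt1: "\<not> ereal delta < \<tau>" using c2 by (auto simp: not_less)
    have ind: "min (ereal delta) (min (ereal T) \<tau>) = \<tau>" using c2 by (auto simp: min_def)
    have F1v: "F1 (cut v) x l \<omega> = 0" unfolding F1_def o prod.case ind using n1 by simp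
    have F3v: "F3 (cut v) x l \<omega> = 0" unfolding F3_def o prod.case ind using n1 by simp
    define s where "s = real_of_ereal \<tau>"
    define y where "y = x + p * s - U"
    show ?thesis
    proof (cases "y < 0")
      case True
      have F2v: "F2 (cut v) x l \<omega> = 0"
        unfolding F2_def o prod.case Let_def s_def[symmetric] y_def[symmetric] using True by simp
      show ?thesis unfolding F1v F2v F3v by simp
    next
      case False
      then have y0: "0 \<le> y" by simp
      have ny: "\<not> x + p * s < U" using False y_def by simp
      have F2v: "F2 (cut v) x l \<omega> = ?e s * (cut v (rho p delta y) (lamc lam0 d l s) + ennreal (y - rho p delta y))"
        unfolding F2_def o prod.case Let_def s_def[symmetric] y_def[symmetric] using ind y0 by simp
      have cv: "cut v (rho p delta y) (lamc lam0 d l s) = v (rho p delta y) (lamc lam0 d l s)"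
        using l by (intro cut_eq rho_grid lamc_ge) auto
      have "?e t * ?R = ennreal (exp (- q * (t + s)) * (y - rho p delta y)) + ?e (t + s) * v (rho p delta y) (lamc lam0 d l s)"
        unfolding F1v F2v F3v cv emult emult' emult2 emult2' by (simp add: algebra_simps)
      also have "\<dots> \<le> ennreal (exp (- q * (t + s)) * (y - rho p delta y)) + J' ((rho p delta y, lamc lam0 d l s, t + s) # h)"
        using l by (intro add_left_mono IH rho_grid lamc_ge) auto
      also have "\<dots> = Gfun J' x l t h \<omega>"
        using c2 nt1 False ny by (simp add: Gfun_def o s_def[symmetric] y_def[symmetric] Let_def less_imp_le)
      finally show ?thesis .
    qed
  next
    case c3
    have ind: "min (ereal delta) (min (ereal T) \<tau>) = ereal T" using c3 by (auto simp: min_def)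
    have F1v: "F1 (cut v) x l \<omega> = 0" unfolding F1_def o prod.case ind using n1 by simp
    have F2v: "F2 (cut v) x l \<omega> = 0" unfolding F2_def o prod.case Let_def ind using n1 by simp
    have F3v: "F3 (cut v) x l \<omega> = ?e T * (cut v x (lamc lam0 d l T + Y) + ennreal (p * T))"
      unfolding F3_def o prod.case using ind by simp
    have cv: "cut v x (lamc lam0 d l T + Y) = v x (lamc lam0 d l T + Y)"
      using x l Y0 lamc_ge[OF l, of T] by (intro cut_eq) auto
    have "?e t * ?R = ennreal (exp (- q * (t + T)) * (p * T)) + ?e (t + T) * v x (lamc lam0 d l T + Y)"
      unfolding F1v F2v F3v cv emult emult' emult2 emult2' by (simp add: algebra_simps)
    also have "\<dots> \<le> ennreal (exp (- q * (t + T)) * (p * T)) + J' ((x, lamc lam0 d l T + Y, t + T) # h)"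
      using x l Y0 lamc_ge[OF l, of T] by (intro add_left_mono IH) auto
    also have "\<dots> = Gfun J' x l t h \<omega>"
    proof -
      have "\<not> \<tau> \<le> ereal T" "\<not> delta < T" using c3 by (auto simp: not_le)
      then show ?thesis using c3 by (simp add: Gfun_def o)
    qed
    finally show ?thesis .
  qed
qed

abbreviation "Om0 \<equiv> (EX1 \<Otimes>\<^sub>M FU) \<Otimes>\<^sub>M (T_law beta \<Otimes>\<^sub>M FY)"

declare sets_Ex[measurable_cong]

lemma Om_distr:
  assumes l: "lam0 \<le> l"
  shows "Om l = distr Om0 ((borel \<Otimes>\<^sub>M FU) \<Otimes>\<^sub>M (T_law beta \<Otimes>\<^sub>M FY))
                 (\<lambda>\<omega>. ((tmap l (fst (fst \<omega>)), snd (fst \<omega>)), snd \<omega>))"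
proof -
  have m: "tmap l \<in> measurable EX1 borel"
    using tmap_meas1[OF l] measurable_cong_sets[OF sets_Ex refl, of borel] by blast
  have sfFU: "sigma_finite_measure (distr FU FU (\<lambda>x. x))" using sf_FU by simp
  have 1: "tau_law lam0 d l \<Otimes>\<^sub>M FU = distr (EX1 \<Otimes>\<^sub>M FU) (borel \<Otimes>\<^sub>M FU) (\<lambda>(x, y). (tmap l x, y))"
    using pair_measure_distr[OF m measurable_ident_sets[OF refl, of FU] sfFU] unfolding tau_law_def by simp
  have m2: "(\<lambda>(x, y). (tmap l x, y)) \<in> measurable (EX1 \<Otimes>\<^sub>M FU) (borel \<Otimes>\<^sub>M FU)"
    using m by measurable
  have sfB: "sigma_finite_measure (distr (T_law beta \<Otimes>\<^sub>M FY) (T_law beta \<Otimes>\<^sub>M FY) (\<lambda>x. x))" using sf_B by simp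
  have "Om l = distr (EX1 \<Otimes>\<^sub>M FU) (borel \<Otimes>\<^sub>M FU) (\<lambda>(x, y). (tmap l x, y)) \<Otimes>\<^sub>M
      distr (T_law beta \<Otimes>\<^sub>M FY) (T_law beta \<Otimes>\<^sub>M FY) (\<lambda>x. x)"
    unfolding Omega_def 1 by simp
  also have "\<dots> = distr Om0 ((borel \<Otimes>\<^sub>M FU) \<Otimes>\<^sub>M (T_law beta \<Otimes>\<^sub>M FY))
      (\<lambda>(x, y). ((\<lambda>(x, y). (tmap l x, y)) x, y))"
    by (rule pair_measure_distr[OF m2 measurable_ident_sets[OF refl] sfB])
  also have "(\<lambda>(x, y). ((\<lambda>(x, y). (tmap l x, y)) x, y)) = (\<lambda>\<omega>. ((tmap l (fst (fst \<omega>)), snd (fst \<omega>)), snd \<omega>))"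
    by auto
  finally show ?thesis .
qed

lemma sf_Om0: "sigma_finite_measure Om0"
proof -
  have "prob_space Om0"
    by (intro prob_space_pair prob_Ex FU prob_TL FY)
  then show ?thesis by (simp add: prob_space_imp_sigma_finite)
qed

lemma meas_int_F:
  assumes w: "\<And>x. (\<lambda>l. w x l) \<in> borel_measurable borel"
    and F: "F = F1 \<or> F = F2 \<or> F = F3"
  shows "(\<lambda>l. \<integral>\<^sup>+ \<omega>. F w x (max lam0 l) \<omega> \<partial>Om (max lam0 l)) \<in> borel_measurable borel"
proof -
  let ?M = "borel \<Otimes>\<^sub>M Om0 :: (real \<times> (real \<times> real) \<times> (real \<times> real)) measure"
  let ?phi = "\<lambda>l. (\<lambda>\<omega>. ((tmap (max lam0 l) (fst (fst \<omega>)), snd (fst \<omega>)), snd \<omega>))"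
  have mt: "(\<lambda>z. tmap (max lam0 (fst z)) (fst (fst (snd z)))) \<in> borel_measurable ?M"
    using measurable_compose[OF _ tmap_meas, of "\<lambda>z. (fst z, fst (fst (snd z)))" ?M] by simp
  have m: "(\<lambda>z. max lam0 (fst z)) \<in> borel_measurable ?M" "(\<lambda>z. snd (fst (snd z))) \<in> borel_measurable ?M"
     "(\<lambda>z. fst (snd (snd z))) \<in> borel_measurable ?M" "(\<lambda>z. snd (snd (snd z))) \<in> borel_measurable ?M" by measurable
  have jm: "(\<lambda>z. F w x (max lam0 (fst z)) ((tmap (max lam0 (fst z)) (fst (fst (snd z))), snd (fst (snd z))),
       (fst (snd (snd z)), snd (snd (snd z))))) \<in> borel_measurable ?M"
    using F meas_F[OF w m(1) mt m(2) m(3) m(4), where x=x] by auto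
  have eq: "(\<integral>\<^sup>+ \<omega>. F w x (max lam0 l) \<omega> \<partial>Om (max lam0 l)) = (\<integral>\<^sup>+ \<omega>. F w x (max lam0 l) (?phi l \<omega>) \<partial>Om0)" for l
  proof -
    have l: "lam0 \<le> max lam0 l" by simp
    have mphi: "?phi l \<in> measurable Om0 ((borel \<Otimes>\<^sub>M FU) \<Otimes>\<^sub>M (T_law beta \<Otimes>\<^sub>M FY))"
    proof -
      note [measurable] = tmap_meas1[OF l]
      show ?thesis by measurable
    qed
    have mF: "F w x (max lam0 l) \<in> borel_measurable (distr Om0 ((borel \<Otimes>\<^sub>M FU) \<Otimes>\<^sub>M (T_law beta \<Otimes>\<^sub>M FY)) (?phi l))"
      using F meas_F_Om[OF w, where x=x and l="max lam0 l"] unfolding Om_distr[OF l] by auto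
    show ?thesis unfolding Om_distr[OF l] by (rule nn_integral_distr[OF mphi mF])
  qed
  interpret S: sigma_finite_measure Om0 by (rule sf_Om0)
  have "(\<lambda>l. \<integral>\<^sup>+ \<omega>. F w x (max lam0 l) (?phi l \<omega>) \<partial>Om0) \<in> borel_measurable borel"
  proof (rule S.borel_measurable_nn_integral)
    show "case_prod (\<lambda>l \<omega>. F w x (max lam0 l) (?phi l \<omega>)) \<in> borel_measurable ?M"
      using jm by (simp add: case_prod_beta')
  qed
  then show ?thesis unfolding eq .
qed

lemma rmeas_iff: "(f \<in> borel_measurable (restrict_space borel {lam0..})) \<longleftrightarrow> ((\<lambda>l. f (max lam0 l)) \<in> borel_measurable borel)"
proof
  assume f: "f \<in> borel_measurable (restrict_space borel {lam0..})"
  have "(\<lambda>l. max lam0 l) \<in> measurable borel (restrict_space borel {lam0..})"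
    by (rule measurable_restrict_space2) auto
  from measurable_compose[OF this f] show "(\<lambda>l. f (max lam0 l)) \<in> borel_measurable borel" .
next
  assume f: "(\<lambda>l. f (max lam0 l)) \<in> borel_measurable borel"
  then have "(\<lambda>l. f (max lam0 l)) \<in> borel_measurable (restrict_space borel {lam0..})"
    by (rule measurable_restrict_space1)
  then show "f \<in> borel_measurable (restrict_space borel {lam0..})"
    by (rule measurable_cong[THEN iffD1, rotated]) (auto simp: space_restrict_space max_def)
qed

lemma meas_T0:
  assumes w: "\<And>x. (\<lambda>l. w x l) \<in> borel_measurable borel"
  shows "(\<lambda>l. T0 p q d beta lam0 FU FY delta w x (max lam0 l)) \<in> borel_measurable borel"
proof -
  have eq: "T0 p q d beta lam0 FU FY delta w x (max lam0 l) =
    (\<integral>\<^sup>+ \<omega>. F1 w x (max lam0 l) \<omega> \<partial>Om (max lam0 l)) + (\<integral>\<^sup>+ \<omega>. F2 w x (max lam0 l) \<omega> \<partial>Om (max lam0 l))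
     + (\<integral>\<^sup>+ \<omega>. F3 w x (max lam0 l) \<omega> \<partial>Om (max lam0 l))" for l
    unfolding T0_eq[OF w] using meas_F_Om[OF w, where x=x and l="max lam0 l"] by (simp add: nn_integral_add)
  show ?thesis unfolding eq
    using meas_int_F[OF w, where F=F1 and x=x] meas_int_F[OF w, where F=F2 and x=x] meas_int_F[OF w, where F=F3 and x=x] by measurable
qed

definition U :: "nat \<Rightarrow> real \<Rightarrow> real \<Rightarrow> ennreal" where
  "U n = ((Top p q d beta lam0 FU FY delta) ^^ n) (\<lambda>x l. 0)"

lemma U_0: "U 0 = (\<lambda>x l. 0)" by (simp add: U_def)
lemma U_Suc: "U (Suc n) = Top p q d beta lam0 FU FY delta (U n)" by (simp add: U_def)

lemma meas_U: "x \<in> grid p delta \<Longrightarrow> (\<lambda>l. U n x l) \<in> borel_measurable (restrict_space borel {lam0..})"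
proof (induction n arbitrary: x)
  case 0
  then show ?case by (simp add: U_0)
next
  case (Suc n)
  have c: "\<And>y. (\<lambda>l. cut (U n) y l) \<in> borel_measurable borel"
    by (rule meas_cut) (rule Suc.IH)
  have t0: "(\<lambda>l. T0 p q d beta lam0 FU FY delta (U n) x (max lam0 l)) \<in> borel_measurable borel"
  proof -
    have "T0 p q d beta lam0 FU FY delta (U n) x (max lam0 l) = T0 p q d beta lam0 FU FY delta (cut (U n)) x (max lam0 l)" for l
      using T0_cut[OF Suc.prems, of "max lam0 l" "U n"] by simp
    then show ?thesis using meas_T0[OF c, where x=x] by simp
  qed
  have t1: "(\<lambda>l. T1 p delta (U n) x (max lam0 l)) \<in> borel_measurable borel" if "p * delta \<le> x"
  proof -
    have "(\<lambda>l. U n (x - p * delta) (max lam0 l)) \<in> borel_measurable borel"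
      using Suc.IH[OF grid_sub[OF Suc.prems that]] unfolding rmeas_iff .
    then show ?thesis unfolding T1_def by measurable
  qed
  have "(\<lambda>l. Top p q d beta lam0 FU FY delta (U n) x (max lam0 l)) \<in> borel_measurable borel"
  proof (cases "p * delta \<le> x")
    case True
    then show ?thesis unfolding Top_def TF_def using t0 t1[OF True] by simp
  next
    case False
    then show ?thesis unfolding Top_def TF_def using t0 by simp
  qed
  then show ?case unfolding rmeas_iff U_Suc .
qed

lemma T0_int:
  assumes w: "\<And>x. x \<in> grid p delta \<Longrightarrow> (\<lambda>l. w x l) \<in> borel_measurable (restrict_space borel {lam0..})"
    and x: "x \<in> grid p delta" and l: "lam0 \<le> l"
  shows "T0 p q d beta lam0 FU FY delta w x l = (\<integral>\<^sup>+ \<omega>. F1 (cut w) x l \<omega> + F2 (cut w) x l \<omega> + F3 (cut w) x l \<omega> \<partial>Om l)"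
  using T0_cut[OF x l, of w] T0_eq[OF meas_cut[OF w]] by simp

lemma meas_sumF:
  assumes w: "\<And>x. x \<in> grid p delta \<Longrightarrow> (\<lambda>l. w x l) \<in> borel_measurable (restrict_space borel {lam0..})"
  shows "(\<lambda>\<omega>. F1 (cut w) x l \<omega> + F2 (cut w) x l \<omega> + F3 (cut w) x l \<omega>) \<in> borel_measurable (Om l)"
  using meas_F_Om[OF meas_cut[OF w], where x=x and l=l] by measurable

lemma upper:
  assumes M: "\<And>n x. x \<in> grid p delta \<Longrightarrow> (\<lambda>l. w n x l) \<in> borel_measurable (restrict_space borel {lam0..})"
    and S: "\<And>n x l. x \<in> grid p delta \<Longrightarrow> lam0 \<le> l \<Longrightarrow> Top p q d beta lam0 FU FY delta (w n) x l \<le> w (Suc n) x l"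
    and adm: "admissible p delta \<pi>"
  shows "h \<noteq> [] \<Longrightarrow> hd h = (x, l, t) \<Longrightarrow> x \<in> grid p delta \<Longrightarrow> lam0 \<le> l \<Longrightarrow>
     Jn p q d beta lam0 FU FY delta \<pi> n h \<le> ennreal (exp (- q * t)) * w n x l"
proof (induction n arbitrary: h x l t)
  case 0
  then show ?case by simp
next
  case (Suc n)
  let ?e = "ennreal (exp (- q * t))"
  have Top: "Top p q d beta lam0 FU FY delta (w n) x l \<le> w (Suc n) x l" using S Suc.prems by blast
  obtain h0 where h: "h = (x, l, t) # h0" using Suc.prems by (cases h) auto
  show ?case
  proof (cases "\<pi> h")
    case E0
    have "Jn p q d beta lam0 FU FY delta \<pi> (Suc n) h = (\<integral>\<^sup>+ \<omega>. Gfun (Jn p q d beta lam0 FU FY delta \<pi> n) x l t h \<omega> \<partial>Om l)"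
      using Suc.prems(2) E0 by (rule Jn_E0)
    also have "\<dots> \<le> (\<integral>\<^sup>+ \<omega>. ?e * (F1 (cut (w n)) x l \<omega> + F2 (cut (w n)) x l \<omega> + F3 (cut (w n)) x l \<omega>) \<partial>Om l)"
    proof (rule nn_integral_mono_AE, rule AE_mp[OF AE_Y[OF Suc.prems(4)]], rule AE_I2, rule impI)
      fix \<omega> :: "(ereal \<times> real) \<times> (real \<times> real)" assume "0 < snd (snd \<omega>)"
      then show "Gfun (Jn p q d beta lam0 FU FY delta \<pi> n) x l t h \<omega> \<le> ?e * (F1 (cut (w n)) x l \<omega> + F2 (cut (w n)) x l \<omega> + F3 (cut (w n)) x l \<omega>)"
        using Suc.prems(3,4) by (intro G_le Suc.IH) auto
    qed
    also have "\<dots> = ?e * (\<integral>\<^sup>+ \<omega>. F1 (cut (w n)) x l \<omega> + F2 (cut (w n)) x l \<omega> + F3 (cut (w n)) x l \<omega> \<partial>Om l)"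
      using meas_sumF[where w="w n" and x=x and l=l, OF M] by (rule nn_integral_cmult)
    also have "\<dots> = ?e * T0 p q d beta lam0 FU FY delta (w n) x l"
      using T0_int[where w="w n", OF M Suc.prems(3,4)] by simp
    also have "\<dots> \<le> ?e * w (Suc n) x l"
      using T0_le_Top Top by (intro mult_left_mono) (auto intro: order_trans)
    finally show ?thesis .
  next
    case E1
    have px: "p * delta \<le> x" using adm E1 h unfolding admissible_def by blast
    have "Jn p q d beta lam0 FU FY delta \<pi> (Suc n) h = ennreal (exp (- q * t) * (p * delta))
               + Jn p q d beta lam0 FU FY delta \<pi> n ((x - p * delta, l, t) # h)"
      using Suc.prems(2) E1 by (rule Jn_E1)
    also have "\<dots> \<le> ennreal (exp (- q * t) * (p * delta)) + ?e * w n (x - p * delta) l"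
      using Suc.prems grid_sub[OF Suc.prems(3) px] by (intro add_left_mono Suc.IH) auto
    also have "\<dots> = ?e * T1 p delta (w n) x l"
    proof -
      have "ennreal (exp (- q * t) * (p * delta)) = ?e * ennreal (delta * p)"
        by (subst ennreal_mult') (auto simp: mult.commute)
      then show ?thesis unfolding T1_def by (simp add: distrib_left add.commute)
    qed
    also have "\<dots> \<le> ?e * w (Suc n) x l"
      using T1_le_Top[OF px] Top by (intro mult_left_mono) (auto intro: order_trans)
    finally show ?thesis .
  next
    case EF
    have "Jn p q d beta lam0 FU FY delta \<pi> (Suc n) h = ennreal (exp (- q * t) * x)"
      using Suc.prems(2) EF by (rule Jn_EF)
    also have "\<dots> = ?e * TF x l" unfolding TF_def by (simp add: ennreal_mult')
    also have "\<dots> \<le> ?e * w (Suc n) x l"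
      using TF_le_Top Top by (intro mult_left_mono) (auto intro: order_trans)
    finally show ?thesis .
  qed
qed

definition choice :: "(real \<Rightarrow> real \<Rightarrow> ennreal) \<Rightarrow> real \<Rightarrow> real \<Rightarrow> act" where
  "choice w x l = (if p * delta \<le> x \<and> T0 p q d beta lam0 FU FY delta w x l \<le> T1 p delta w x l \<and> TF x l \<le> T1 p delta w x l
     then E1 else if T0 p q d beta lam0 FU FY delta w x l \<le> TF x l then EF else E0)"

lemma choice_E1: "choice w x l = E1 \<Longrightarrow> p * delta \<le> x \<and> Top p q d beta lam0 FU FY delta w x l = T1 p delta w x l"
  unfolding choice_def Top_def by (auto split: if_splits simp: max_def)

lemma choice_EF: "choice w x l = EF \<Longrightarrow> Top p q d beta lam0 FU FY delta w x l = TF x l"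
  unfolding choice_def Top_def by (auto split: if_splits simp: max_def not_le)

lemma choice_E0: "choice w x l = E0 \<Longrightarrow> Top p q d beta lam0 FU FY delta w x l = T0 p q d beta lam0 FU FY delta w x l"
  unfolding choice_def Top_def by (auto split: if_splits simp: max_def not_le)

definition pol :: "nat \<Rightarrow> policy" where
  "pol N h = (case hd h of (x, l, t) \<Rightarrow> if length h \<le> N then choice (U (N - length h)) x l else E0)"

lemma pol_adm: "admissible p delta (pol N)"
  unfolding admissible_def pol_def by (auto split: if_splits dest: choice_E1)

lemma lower:
  shows "h \<noteq> [] \<Longrightarrow> hd h = (x, l, t) \<Longrightarrow> length h + m = N + 1 \<Longrightarrow> x \<in> grid p delta \<Longrightarrow> lam0 \<le> l \<Longrightarrow>
     ennreal (exp (- q * t)) * U m x l \<le> Jn p q d beta lam0 FU FY delta (pol N) m h"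
proof (induction m arbitrary: h x l t)
  case 0
  then show ?case by (simp add: U_0)
next
  case (Suc k)
  let ?e = "ennreal (exp (- q * t))"
  have len: "length h \<le> N" "N - length h = k" using Suc.prems(3) by auto
  have ph: "pol N h = choice (U k) x l" using Suc.prems(2) len by (simp add: pol_def)
  have M: "\<And>x. x \<in> grid p delta \<Longrightarrow> (\<lambda>l. U k x l) \<in> borel_measurable (restrict_space borel {lam0..})"
    by (rule meas_U)
  show ?case
  proof (cases "choice (U k) x l")
    case E0
    have pE: "pol N h = E0" using ph E0 by simp
    have "?e * U (Suc k) x l = ?e * T0 p q d beta lam0 FU FY delta (U k) x l"
      using choice_E0[OF E0] by (simp add: U_Suc)
    also have "\<dots> = ?e * (\<integral>\<^sup>+ \<omega>. F1 (cut (U k)) x l \<omega> + F2 (cut (U k)) x l \<omega> + F3 (cut (U k)) x l \<omega> \<partial>Om l)"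
      using T0_int[where w="U k", OF M Suc.prems(4,5)] by simp
    also have "\<dots> = (\<integral>\<^sup>+ \<omega>. ?e * (F1 (cut (U k)) x l \<omega> + F2 (cut (U k)) x l \<omega> + F3 (cut (U k)) x l \<omega>) \<partial>Om l)"
      using meas_sumF[where w="U k" and x=x and l=l, OF M] by (rule nn_integral_cmult[symmetric])
    also have "\<dots> \<le> (\<integral>\<^sup>+ \<omega>. Gfun (Jn p q d beta lam0 FU FY delta (pol N) k) x l t h \<omega> \<partial>Om l)"
    proof (rule nn_integral_mono_AE)
      show "AE \<omega> in Om l. ?e * (F1 (cut (U k)) x l \<omega> + F2 (cut (U k)) x l \<omega> + F3 (cut (U k)) x l \<omega>)
          \<le> Gfun (Jn p q d beta lam0 FU FY delta (pol N) k) x l t h \<omega>"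
        using AE_Y[OF Suc.prems(5)] AE_tau[OF Suc.prems(5)] AE_T[OF Suc.prems(5)] AE_Ttau[OF Suc.prems(5)]
      proof (eventually_elim)
        case (elim \<omega>)
        show ?case
        proof (rule G_ge)
          fix x' l' t' assume "x' \<in> grid p delta" "lam0 \<le> l'"
          then show "ennreal (exp (- q * t')) * U k x' l' \<le> Jn p q d beta lam0 FU FY delta (pol N) k ((x', l', t') # h)"
            using Suc.prems(3) by (intro Suc.IH) auto
        qed (use elim Suc.prems in auto)
      qed
    qed
    also have "\<dots> = Jn p q d beta lam0 FU FY delta (pol N) (Suc k) h"
      using Suc.prems(2) pE by (rule Jn_E0[symmetric])
    finally show ?thesis .
  next
    case E1
    have pE: "pol N h = E1" using ph E1 by simp
    have px: "p * delta \<le> x" using choice_E1[OF E1] by simp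
    have "?e * U (Suc k) x l = ?e * T1 p delta (U k) x l"
      using choice_E1[OF E1] by (simp add: U_Suc)
    also have "\<dots> = ennreal (exp (- q * t) * (p * delta)) + ?e * U k (x - p * delta) l"
    proof -
      have "ennreal (exp (- q * t) * (p * delta)) = ?e * ennreal (delta * p)"
        by (subst ennreal_mult') (auto simp: mult.commute)
      then show ?thesis unfolding T1_def by (simp add: distrib_left add.commute)
    qed
    also have "\<dots> \<le> ennreal (exp (- q * t) * (p * delta)) + Jn p q d beta lam0 FU FY delta (pol N) k ((x - p * delta, l, t) # h)"
      using Suc.prems grid_sub[OF Suc.prems(4) px] by (intro add_left_mono Suc.IH) auto
    also have "\<dots> = Jn p q d beta lam0 FU FY delta (pol N) (Suc k) h"
      using Suc.prems(2) pE by (rule Jn_E1[symmetric])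
    finally show ?thesis .
  next
    case EF
    have pE: "pol N h = EF" using ph EF by simp
    have "?e * U (Suc k) x l = ?e * TF x l"
      using choice_EF[OF EF] by (simp add: U_Suc)
    also have "\<dots> = ennreal (exp (- q * t) * x)" unfolding TF_def by (simp add: ennreal_mult')
    also have "\<dots> = Jn p q d beta lam0 FU FY delta (pol N) (Suc k) h"
      using Suc.prems(2) pE by (rule Jn_EF[symmetric])
    finally show ?thesis by simp
  qed
qed

lemma U_mono: "U n x l \<le> U (Suc n) x l"
proof (induction n arbitrary: x l)
  case 0 then show ?case by (simp add: U_0)
next
  case (Suc n) then show ?case unfolding U_Suc[of "Suc n"] U_Suc[of n] by (intro Top_mono) auto
qed

lemma sup_add_c: "(SUP i. f i) + (c::ennreal) = (SUP i. f i + c)"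
  using ennreal_SUP_add_left[of UNIV f c] by simp

lemma F_SUP:
  "F1 (\<lambda>x l. SUP n. w n x l) x l \<omega> = (SUP n. F1 (w n) x l \<omega>)"
  "F2 (\<lambda>x l. SUP n. w n x l) x l \<omega> = (SUP n. F2 (w n) x l \<omega>)"
  "F3 (\<lambda>x l. SUP n. w n x l) x l \<omega> = (SUP n. F3 (w n) x l \<omega>)"
proof -
  obtain \<tau> U T Y where o: "\<omega> = ((\<tau>, U), (T, Y))" by (metis prod.collapse)
  show "F1 (\<lambda>x l. SUP n. w n x l) x l \<omega> = (SUP n. F1 (w n) x l \<omega>)"
    unfolding F1_def o prod.case SUP_mult_left_ennreal ..
  show "F2 (\<lambda>x l. SUP n. w n x l) x l \<omega> = (SUP n. F2 (w n) x l \<omega>)"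
    unfolding F2_def o prod.case Let_def sup_add_c SUP_mult_left_ennreal ..
  show "F3 (\<lambda>x l. SUP n. w n x l) x l \<omega> = (SUP n. F3 (w n) x l \<omega>)"
    unfolding F3_def o prod.case sup_add_c SUP_mult_left_ennreal ..
qed

lemma F_mono:
  assumes "\<And>x l. w x l \<le> w' x l"
  shows "F1 w x l \<omega> \<le> F1 w' x l \<omega>" "F2 w x l \<omega> \<le> F2 w' x l \<omega>" "F3 w x l \<omega> \<le> F3 w' x l \<omega>"
  using assms by (cases \<omega>; auto simp: F1_def F2_def F3_def Let_def intro!: mult_left_mono add_right_mono)+

lemma T0_SUP:
  assumes w: "\<And>n x. (\<lambda>l. w n x l) \<in> borel_measurable borel"
    and inc: "\<And>n x l. w n x l \<le> w (Suc n) x l"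
  shows "T0 p q d beta lam0 FU FY delta (\<lambda>x l. SUP n. w n x l) x l \<le> (SUP n. T0 p q d beta lam0 FU FY delta (w n) x l)"
proof -
  let ?F = "\<lambda>n \<omega>. F1 (w n) x l \<omega> + F2 (w n) x l \<omega> + F3 (w n) x l \<omega>"
  have ws: "\<And>x. (\<lambda>l. SUP n. w n x l) \<in> borel_measurable borel" using w by measurable
  have incF: "incseq (\<lambda>n. F1 (w n) x l \<omega>)" "incseq (\<lambda>n. F2 (w n) x l \<omega>)" "incseq (\<lambda>n. F3 (w n) x l \<omega>)" for \<omega>
    by (intro incseq_SucI F_mono inc)+
  have pw: "F1 (\<lambda>x l. SUP n. w n x l) x l \<omega> + F2 (\<lambda>x l. SUP n. w n x l) x l \<omega> + F3 (\<lambda>x l. SUP n. w n x l) x l \<omega>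
     = (SUP n. ?F n \<omega>)" for \<omega>
  proof -
    have "(SUP n. ?F n \<omega>) = (SUP n. F1 (w n) x l \<omega> + F2 (w n) x l \<omega>) + (SUP n. F3 (w n) x l \<omega>)"
      using incF[of \<omega>] by (intro ennreal_SUP_add) (auto simp: incseq_def intro: add_mono)
    also have "(SUP n. F1 (w n) x l \<omega> + F2 (w n) x l \<omega>) = (SUP n. F1 (w n) x l \<omega>) + (SUP n. F2 (w n) x l \<omega>)"
      using incF[of \<omega>] by (intro ennreal_SUP_add) auto
    finally show ?thesis by (simp add: F_SUP)
  qed
  have "T0 p q d beta lam0 FU FY delta (\<lambda>x l. SUP n. w n x l) x l = (\<integral>\<^sup>+ \<omega>. (SUP n. ?F n \<omega>) \<partial>Om l)"
    unfolding T0_eq[OF ws] pw ..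
  also have "\<dots> = (SUP n. \<integral>\<^sup>+ \<omega>. ?F n \<omega> \<partial>Om l)"
  proof (rule nn_integral_monotone_convergence_SUP)
    show "incseq ?F"
    proof (rule incseq_SucI, rule le_funI)
      fix n \<omega> show "?F n \<omega> \<le> ?F (Suc n) \<omega>" by (intro add_mono F_mono inc)
    qed
    show "?F n \<in> borel_measurable (Om l)" for n using meas_F_Om[OF w, where x=x and l=l] by measurable
  qed
  also have "\<dots> = (SUP n. T0 p q d beta lam0 FU FY delta (w n) x l)"
    unfolding T0_eq[OF w] ..
  finally show ?thesis by simp
qed

lemma Jn_le_U: assumes "admissible p delta \<pi>" "x \<in> grid p delta" "lam0 \<le> l"
  shows "Jn p q d beta lam0 FU FY delta \<pi> n [(x, l, 0)] \<le> U n x l"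
  using upper[where w=U, OF meas_U _ assms(1), of "[(x, l, 0)]" x l 0 n] assms(2,3) by (simp add: U_Suc)

lemma U_le_J: assumes "x \<in> grid p delta" "lam0 \<le> l"
  shows "U n x l \<le> J p q d beta lam0 FU FY delta (pol n) x l"
proof -
  have "U n x l \<le> Jn p q d beta lam0 FU FY delta (pol n) n [(x, l, 0)]"
    using lower[of "[(x, l, 0)]" x l 0 n n] assms by simp
  also have "\<dots> \<le> J p q d beta lam0 FU FY delta (pol n) x l"
    unfolding J_def by (rule SUP_upper) simp
  finally show ?thesis .
qed

lemma V_eq: assumes "x \<in> grid p delta" "lam0 \<le> l"
  shows "Vdelta p q d beta lam0 FU FY delta x l = (SUP n. U n x l)"
proof (rule antisym)
  show "Vdelta p q d beta lam0 FU FY delta x l \<le> (SUP n. U n x l)"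
    unfolding Vdelta_def J_def
    by (intro SUP_least) (auto intro: SUP_upper2 Jn_le_U assms)
  show "(SUP n. U n x l) \<le> Vdelta p q d beta lam0 FU FY delta x l"
  proof (rule SUP_least)
    fix n
    have "U n x l \<le> J p q d beta lam0 FU FY delta (pol n) x l" by (rule U_le_J[OF assms])
    also have "\<dots> \<le> Vdelta p q d beta lam0 FU FY delta x l"
      unfolding Vdelta_def by (rule SUP_upper) (simp add: pol_adm)
    finally show "U n x l \<le> Vdelta p q d beta lam0 FU FY delta x l" .
  qed
qed

lemma part1: assumes "x \<in> grid p delta"
  shows "(\<lambda>l. Vdelta p q d beta lam0 FU FY delta x l) \<in> borel_measurable (restrict_space borel {lam0..})"
proof -
  have "(\<lambda>l. SUP n. U n x l) \<in> borel_measurable (restrict_space borel {lam0..})"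
    using meas_U[OF assms] by measurable
  then show ?thesis
    by (rule measurable_cong[THEN iffD1, rotated]) (auto simp: space_restrict_space V_eq[OF assms])
qed

lemma part4:
  assumes M: "\<And>x. x \<in> grid p delta \<Longrightarrow> (\<lambda>l. W x l) \<in> borel_measurable (restrict_space borel {lam0..})"
    and S: "\<And>x l. x \<in> grid p delta \<Longrightarrow> lam0 \<le> l \<Longrightarrow>
        Top p q d beta lam0 FU FY delta (\<lambda>x l. ennreal (W x l)) x l \<le> ennreal (W x l)"
    and x: "x \<in> grid p delta" and l: "lam0 \<le> l"
  shows "Vdelta p q d beta lam0 FU FY delta x l \<le> ennreal (W x l)"
proof -
  have M': "\<And>x. x \<in> grid p delta \<Longrightarrow> (\<lambda>l. ennreal (W x l)) \<in> borel_measurable (restrict_space borel {lam0..})"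
    using M by measurable
  have "Jn p q d beta lam0 FU FY delta \<pi> n [(x, l, 0)] \<le> ennreal (W x l)" if "admissible p delta \<pi>" for \<pi> n
    using upper[where w="\<lambda>n x l. ennreal (W x l)", OF M' S that, of "[(x, l, 0)]" x l 0 n] x l by simp
  then show ?thesis unfolding Vdelta_def J_def by (auto intro!: SUP_least)
qed

lemma part2: assumes x: "x \<in> grid p delta" and l: "lam0 \<le> l"
  shows "Top p q d beta lam0 FU FY delta (Vdelta p q d beta lam0 FU FY delta) x l \<le> Vdelta p q d beta lam0 FU FY delta x l"
proof -
  let ?V = "Vdelta p q d beta lam0 FU FY delta"
  have Vx: "?V x l = (SUP n. U n x l)" by (rule V_eq[OF x l])
  have cutV: "cut ?V = (\<lambda>x l. SUP n. cut (U n) x l)"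
    by (auto simp: cut_def fun_eq_iff V_eq)
  have mc: "\<And>n x. (\<lambda>l. cut (U n) x l) \<in> borel_measurable borel"
    by (rule meas_cut) (rule meas_U)
  have ic: "\<And>n x l. cut (U n) x l \<le> cut (U (Suc n)) x l"
    by (auto simp: cut_def U_mono)
  have "T0 p q d beta lam0 FU FY delta ?V x l = T0 p q d beta lam0 FU FY delta (\<lambda>x l. SUP n. cut (U n) x l) x l"
    using T0_cut[OF x l, of ?V] cutV by simp
  also have "\<dots> \<le> (SUP n. T0 p q d beta lam0 FU FY delta (cut (U n)) x l)"
    by (rule T0_SUP[where w="\<lambda>n. cut (U n)", OF mc ic])
  also have "\<dots> = (SUP n. T0 p q d beta lam0 FU FY delta (U n) x l)"
    using T0_cut[OF x l] by simp
  also have "\<dots> \<le> (SUP n. U (Suc n) x l)"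
    by (intro SUP_mono) (auto simp: U_Suc intro: T0_le_Top)
  also have "\<dots> \<le> ?V x l" unfolding Vx by (intro SUP_least SUP_upper) auto
  finally have t0: "T0 p q d beta lam0 FU FY delta ?V x l \<le> ?V x l" .
  have tf: "TF x l \<le> ?V x l"
  proof -
    have "TF x l \<le> U 1 x l" by (simp add: U_Suc[of 0, simplified] TF_le_Top)
    also have "\<dots> \<le> ?V x l" unfolding Vx by (rule SUP_upper) simp
    finally show ?thesis .
  qed
  have t1: "T1 p delta ?V x l \<le> ?V x l" if px: "p * delta \<le> x"
  proof -
    have "T1 p delta ?V x l = (SUP n. U n (x - p * delta) l) + ennreal (delta * p)"
      unfolding T1_def using V_eq[OF grid_sub[OF x px] l] by simp
    also have "\<dots> = (SUP n. T1 p delta (U n) x l)" unfolding T1_def sup_add_c ..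
    also have "\<dots> \<le> (SUP n. U (Suc n) x l)"
      by (intro SUP_mono) (auto simp: U_Suc intro: T1_le_Top[OF px])
    also have "\<dots> \<le> ?V x l" unfolding Vx by (intro SUP_least SUP_upper) auto
    finally show ?thesis .
  qed
  show ?thesis
    unfolding Top_def using t0 t1 tf by auto
qed

lemma AE_tau0: assumes l: "lam0 \<le> l" shows "AE \<omega> in Om l. 0 \<le> fst (fst \<omega>)"
proof -
  have m: "tmap l \<in> measurable EX1 borel"
    using tmap_meas1[OF l] measurable_cong_sets[OF sets_Ex refl, of borel] by blast
  have "AE \<tau> in tau_law lam0 d l. 0 \<le> \<tau>" unfolding tau_law_def
    by (subst AE_distr_iff[OF m]) (auto intro!: AE_I2 tmap_nonneg)
  then show ?thesis unfolding Omega_def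
    by (intro AE_fst_lift[of _ _ "\<lambda>z. 0 \<le> fst z"] sf_A l sf_B
      AE_fst_lift[of _ _ "\<lambda>T. 0 \<le> T"] sf_tau sf_FU) (auto simp: sets_tau)
qed

lemma key_ineq: assumes a: "0 \<le> a" and x: "0 \<le> x"
  shows "exp (- q * (t + a)) * (x + p * a + p / q) \<le> exp (- q * t) * (x + p / q)"
proof -
  have e1: "exp (- q * a) \<le> 1" using q a by simp
  have "1 + q * a \<le> exp (q * a)" by (rule exp_ge_add_one_self)
  then have "(1 + q * a) * exp (- q * a) \<le> exp (q * a) * exp (- q * a)"
    by (intro mult_right_mono) auto
  also have "\<dots> = 1" by (simp add: exp_add[symmetric])
  finally have "(1 + q * a) * exp (- q * a) \<le> 1" .
  then have "(p / q) * ((1 + q * a) * exp (- q * a)) \<le> p / q"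
    using p q by (intro mult_left_le) auto
  then have A: "exp (- q * a) * (p * a + p / q) \<le> p / q"
    using q by (simp add: field_simps)
  have B: "exp (- q * a) * x \<le> x" using e1 x by (simp add: mult_left_le_one_le)
  have "exp (- q * a) * (x + p * a + p / q) \<le> x + p / q" using A B by (simp add: algebra_simps)
  then have "exp (- q * t) * (exp (- q * a) * (x + p * a + p / q)) \<le> exp (- q * t) * (x + p / q)"
    by (intro mult_left_mono) auto
  then show ?thesis by (simp add: exp_add[symmetric] algebra_simps)
qed

lemma G_bound:
  assumes IH: "\<And>x' l' t'. 0 \<le> x' \<Longrightarrow> lam0 \<le> l' \<Longrightarrow>
        J' ((x', l', t') # h) \<le> ennreal (exp (- q * t') * (x' + p / q))"
    and x: "0 \<le> x" and l: "lam0 \<le> l" and U: "0 \<le> snd (fst \<omega>)" and T: "0 \<le> fst (snd \<omega>)"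
    and Y: "0 \<le> snd (snd \<omega>)" and ta: "0 \<le> fst (fst \<omega>)"
  shows "Gfun J' x l t h \<omega> \<le> ennreal (exp (- q * t) * (x + p / q))"
proof -
  obtain \<tau> U T Y where o: "\<omega> = ((\<tau>, U), (T, Y))" by (metis prod.collapse)
  have Y0: "0 \<le> Y" "0 \<le> U" "0 \<le> T" "0 \<le> \<tau>" using Y U T ta o by auto
  have pq: "0 < p / q" using p q by simp
  consider (c1) "ereal delta < \<tau> \<and> delta < T"
    | (c2) "\<not> (ereal delta < \<tau> \<and> delta < T)" "\<tau> \<le> ereal delta \<and> \<tau> \<le> ereal T"
    | (c3) "\<not> (ereal delta < \<tau> \<and> delta < T)" "\<not> (\<tau> \<le> ereal delta \<and> \<tau> \<le> ereal T)" "ereal T < \<tau> \<and> T < delta"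
    | (c4) "\<not> (ereal delta < \<tau> \<and> delta < T)" "\<not> (\<tau> \<le> ereal delta \<and> \<tau> \<le> ereal T)" "\<not> (ereal T < \<tau> \<and> T < delta)"
    by blast
  then show ?thesis
  proof cases
    case c1
    have "Gfun J' x l t h \<omega> = J' ((x + p * delta, lamc lam0 d l delta, t + delta) # h)"
      using c1 by (simp add: Gfun_def o)
    also have "\<dots> \<le> ennreal (exp (- q * (t + delta)) * (x + p * delta + p / q))"
      using x l p delta by (intro IH lamc_ge) auto
    also have "\<dots> \<le> ennreal (exp (- q * t) * (x + p / q))"
      using key_ineq[of delta x t] x delta by (intro ennreal_leI) auto
    finally show ?thesis .
  next
    case c2
    have nt1: "\<not> ereal delta < \<tau>" using c2 by (auto simp: not_less)
    define s where "s = real_of_ereal \<tau>"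
    have s0: "0 \<le> s" using Y0(4) unfolding s_def by (cases \<tau>) auto
    define y where "y = x + p * s - U"
    show ?thesis
    proof (cases "y < 0")
      case True
      then have "Gfun J' x l t h \<omega> = 0" using c2 nt1 by (simp add: Gfun_def o s_def y_def Let_def)
      then show ?thesis by simp
    next
      case False
      then have y0: "0 \<le> y" by simp
      have ny: "\<not> x + p * s < U" using False y_def by simp
      have "Gfun J' x l t h \<omega> = ennreal (exp (- q * (t + s)) * (y - rho p delta y))
                     + J' ((rho p delta y, lamc lam0 d l s, t + s) # h)"
        using c2 nt1 False ny by (simp add: Gfun_def o s_def[symmetric] y_def[symmetric] Let_def)
      also have "\<dots> \<le> ennreal (exp (- q * (t + s)) * (y - rho p delta y)) + ennreal (exp (- q * (t + s)) * (rho p delta y + p / q))"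
        using l rho_le[OF y0] by (intro add_left_mono IH lamc_ge) auto
      also have "\<dots> = ennreal (exp (- q * (t + s)) * (y - rho p delta y) + exp (- q * (t + s)) * (rho p delta y + p / q))"
        using rho_le[OF y0] pq by (intro ennreal_plus[symmetric] mult_nonneg_nonneg) auto
      also have "\<dots> = ennreal (exp (- q * (t + s)) * (y + p / q))"
        by (simp add: algebra_simps)
      also have "\<dots> \<le> ennreal (exp (- q * (t + s)) * (x + p * s + p / q))"
        using Y0 unfolding y_def by (intro ennreal_leI mult_left_mono) auto
      also have "\<dots> \<le> ennreal (exp (- q * t) * (x + p / q))"
        using key_ineq[OF s0 x, of t] by (intro ennreal_leI) auto
      finally show ?thesis .
    qed
  next
    case c3
    have "Gfun J' x l t h \<omega> = ennreal (exp (- q * (t + T)) * (p * T)) + J' ((x, lamc lam0 d l T + Y, t + T) # h)"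
    proof -
      have "\<not> \<tau> \<le> ereal T" "\<not> delta < T" using c3 by (auto simp: not_le)
      then show ?thesis using c3 by (simp add: Gfun_def o)
    qed
    also have "\<dots> \<le> ennreal (exp (- q * (t + T)) * (p * T)) + ennreal (exp (- q * (t + T)) * (x + p / q))"
      using x l Y0 lamc_ge[OF l, of T] by (intro add_left_mono IH) auto
    also have "\<dots> = ennreal (exp (- q * (t + T)) * (p * T) + exp (- q * (t + T)) * (x + p / q))"
      using Y0 x p pq by (intro ennreal_plus[symmetric] mult_nonneg_nonneg) auto
    also have "\<dots> = ennreal (exp (- q * (t + T)) * (x + p * T + p / q))"
      by (simp add: algebra_simps)
    also have "\<dots> \<le> ennreal (exp (- q * t) * (x + p / q))"
      using key_ineq[OF Y0(3) x, of t] by (intro ennreal_leI) auto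
    finally show ?thesis .
  next
    case c4
    have "Gfun J' x l t h \<omega> = 0"
      unfolding Gfun_def o prod.case if_not_P[OF c4(1)] if_not_P[OF c4(2)] if_not_P[OF c4(3)] ..
    then show ?thesis by simp
  qed
qed

lemma Jn_bound:
  assumes adm: "admissible p delta \<pi>"
  shows "h \<noteq> [] \<Longrightarrow> hd h = (x, l, t) \<Longrightarrow> 0 \<le> x \<Longrightarrow> lam0 \<le> l \<Longrightarrow>
     Jn p q d beta lam0 FU FY delta \<pi> n h \<le> ennreal (exp (- q * t) * (x + p / q))"
proof (induction n arbitrary: h x l t)
  case 0
  then show ?case by simp
next
  case (Suc n)
  obtain h0 where h: "h = (x, l, t) # h0" using Suc.prems by (cases h) auto
  have pq: "0 < p / q" using p q by simp
  show ?case
  proof (cases "\<pi> h")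
    case E0
    interpret P: prob_space "Om l" by (rule prob_Om[OF Suc.prems(4)])
    have "Jn p q d beta lam0 FU FY delta \<pi> (Suc n) h = (\<integral>\<^sup>+ \<omega>. Gfun (Jn p q d beta lam0 FU FY delta \<pi> n) x l t h \<omega> \<partial>Om l)"
      using Suc.prems(2) E0 by (rule Jn_E0)
    also have "\<dots> \<le> (\<integral>\<^sup>+ \<omega>. ennreal (exp (- q * t) * (x + p / q)) \<partial>Om l)"
    proof (rule nn_integral_mono_AE)
      show "AE \<omega> in Om l. Gfun (Jn p q d beta lam0 FU FY delta \<pi> n) x l t h \<omega> \<le> ennreal (exp (- q * t) * (x + p / q))"
        using AE_Y[OF Suc.prems(4)] AE_U[OF Suc.prems(4)] AE_T[OF Suc.prems(4)] AE_tau0[OF Suc.prems(4)]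
      proof (eventually_elim)
        case (elim \<omega>)
        show ?case
        proof (rule G_bound)
          fix x' l' t' :: real assume "0 \<le> x'" "lam0 \<le> l'"
          then show "Jn p q d beta lam0 FU FY delta \<pi> n ((x', l', t') # h) \<le> ennreal (exp (- q * t') * (x' + p / q))"
            by (intro Suc.IH) auto
        qed (use elim Suc.prems in auto)
      qed
    qed
    also have "\<dots> = ennreal (exp (- q * t) * (x + p / q))"
      by (simp add: P.emeasure_space_1)
    finally show ?thesis .
  next
    case E1
    have px: "p * delta \<le> x" using adm E1 h unfolding admissible_def by blast
    have "Jn p q d beta lam0 FU FY delta \<pi> (Suc n) h = ennreal (exp (- q * t) * (p * delta))
               + Jn p q d beta lam0 FU FY delta \<pi> n ((x - p * delta, l, t) # h)"
      using Suc.prems(2) E1 by (rule Jn_E1)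
    also have "\<dots> \<le> ennreal (exp (- q * t) * (p * delta)) + ennreal (exp (- q * t) * (x - p * delta + p / q))"
      using Suc.prems px by (intro add_left_mono Suc.IH) auto
    also have "\<dots> = ennreal (exp (- q * t) * (p * delta) + exp (- q * t) * (x - p * delta + p / q))"
      using px pq p delta by (intro ennreal_plus[symmetric] mult_nonneg_nonneg) auto
    also have "\<dots> = ennreal (exp (- q * t) * (x + p / q))"
      by (simp add: algebra_simps)
    finally show ?thesis .
  next
    case EF
    have "Jn p q d beta lam0 FU FY delta \<pi> (Suc n) h = ennreal (exp (- q * t) * x)"
      using Suc.prems(2) EF by (rule Jn_EF)
    also have "\<dots> \<le> ennreal (exp (- q * t) * (x + p / q))"
      using pq by (intro ennreal_leI mult_left_mono) auto
    finally show ?thesis .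
  qed
qed

lemma part3: assumes "x \<in> grid p delta" "lam0 \<le> l"
  shows "Vdelta p q d beta lam0 FU FY delta x l \<le> ennreal (p / q + x)"
proof -
  have "Jn p q d beta lam0 FU FY delta \<pi> n [(x, l, 0)] \<le> ennreal (p / q + x)" if "admissible p delta \<pi>" for \<pi> n
    using Jn_bound[OF that, of "[(x, l, 0)]" x l 0 n] assms grid_nonneg[OF assms(1)] by (simp add: add.commute)
  then show ?thesis unfolding Vdelta_def J_def by (auto intro!: SUP_least)
qed

end

theorem corollary6p7:
  fixes p q d beta lam0 eta delta :: real and FU FY :: "real measure"
  assumes "p > 0" "q > 0" "d > 0" "beta > 0" "lam0 \<ge> 0" "delta > 0"
    and "prob_space FU" "sets FU = sets borel" "AE u in FU. u > 0" "integrable FU (\<lambda>u. u)"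
    and "prob_space FY" "sets FY = sets borel" "AE y in FY. y > 0" "integrable FY (\<lambda>y. y)"
    and "eta > 0" "p = (1 + eta) * (\<integral>u. u \<partial>FU) * lambda_av lam0 d beta FY"
  shows
    "(\<forall>x \<in> grid p delta. (\<lambda>l. Vdelta p q d beta lam0 FU FY delta x l)
          \<in> borel_measurable (restrict_space borel {lam0..}))
   \<and> (\<forall>x \<in> grid p delta. \<forall>l \<ge> lam0.
          Top p q d beta lam0 FU FY delta (Vdelta p q d beta lam0 FU FY delta) x l
            \<le> Vdelta p q d beta lam0 FU FY delta x l)
   \<and> (\<exists>K > 0. \<forall>x \<in> grid p delta. \<forall>l \<ge> lam0.
          Vdelta p q d beta lam0 FU FY delta x l \<le> ennreal (K + x))
   \<and> (\<forall>W :: real \<Rightarrow> real \<Rightarrow> real.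
        (\<forall>x \<in> grid p delta. (\<lambda>l. W x l) \<in> borel_measurable (restrict_space borel {lam0..}))
        \<longrightarrow> (\<forall>x \<in> grid p delta. \<forall>l \<ge> lam0. 0 \<le> W x l)
        \<longrightarrow> (\<forall>x \<in> grid p delta. \<forall>l \<ge> lam0.
              Top p q d beta lam0 FU FY delta (\<lambda>x l. ennreal (W x l)) x l \<le> ennreal (W x l))
        \<longrightarrow> (\<exists>K > 0. \<forall>x \<in> grid p delta. \<forall>l \<ge> lam0. W x l \<le> K + x)
        \<longrightarrow> (\<forall>x \<in> grid p delta. \<forall>l \<ge> lam0.
              Vdelta p q d beta lam0 FU FY delta x l \<le> ennreal (W x l)))"
  proof -
  interpret setting p q d beta lam0 delta FU FY
    using assms(1-9,11-13) by (rule setting.intro)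
  show ?thesis
  proof (intro conjI ballI allI impI)
    fix x assume "x \<in> grid p delta"
    then show "(\<lambda>l. Vdelta p q d beta lam0 FU FY delta x l) \<in> borel_measurable (restrict_space borel {lam0..})"
      by (rule part1)
  next
    fix x l assume "x \<in> grid p delta" "lam0 \<le> l"
    then show "Top p q d beta lam0 FU FY delta (Vdelta p q d beta lam0 FU FY delta) x l
            \<le> Vdelta p q d beta lam0 FU FY delta x l"
      by (rule part2)
  next
    show "\<exists>K>0. \<forall>x\<in>grid p delta. \<forall>l\<ge>lam0. Vdelta p q d beta lam0 FU FY delta x l \<le> ennreal (K + x)"
      using part3 assms(1,2) by (intro exI[of _ "p / q"]) auto
  next
    fix W :: "real \<Rightarrow> real \<Rightarrow> real" and x l
    assume M: "\<forall>x\<in>grid p delta. (\<lambda>l. W x l) \<in> borel_measurable (restrict_space borel {lam0..})"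
      and S: "\<forall>x\<in>grid p delta. \<forall>l\<ge>lam0. Top p q d beta lam0 FU FY delta (\<lambda>x l. ennreal (W x l)) x l \<le> ennreal (W x l)"
      and x: "x \<in> grid p delta" and l: "lam0 \<le> l"
    show "Vdelta p q d beta lam0 FU FY delta x l \<le> ennreal (W x l)"
      using M S by (intro part4[OF _ _ x l]) auto
  qed
qed

end
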